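(* Let $\mathcal{A}$ and $\mathcal{B}$ be $C^*$-algebras with regular monotone completions $\overline{\mathcal{A}}$ and $\overline{\mathcal{B}}$, and suppose $\Phi:\mathcal{A}^{sa}\to\mathcal{B}^{sa}$ is an order isomorphism. Then there exists a unique order isomorphism $\overline{\Phi}:\overline{\mathcal{A}}^{sa}\to\overline{\mathcal{B}}^{sa}$ extending $\Phi$.
   Context: All $C^*$-algebras are unital; $\mathcal{A}^{sa}$ is the self-adjoint part with order $a\le b\iff b-a$ positive. An order isomorphism is a bijection preserving order in both directions. A $C^*$-algebra is monotone complete if every bounded increasing net of self-adjoint elements has a supremum in the self-adjoint part. A regular monotone completion of $\mathcal{A}$ is a monotone complete $C^*$-algebra $\overline{\mathcal{A}}$ containing $\mathcal{A}$ as a unital $C^*$-subalgebra (via a unital $^*$-monomorphism) such that $\overline{\mathcal{A}}^{sa}$ is the monotone closure of $\mathcal{A}^{sa}$ in $\overline{\mathcal{A}}^{sa}$ (the smallest subset containing $\mathcal{A}^{sa}$ and closed under suprema/infima, taken in $\overline{\mathcal{A}}^{sa}$, of bounded increasing/decreasing nets), every $b\in\overline{\mathcal{A}}^{sa}$ is the supremum in $\overline{\mathcal{A}}^{sa}$ of $\{a\in\mathcal{A}^{sa}:a\le b\}$, and suprema existing in $\mathcal{A}^{sa}$ remain suprema in $\overline{\mathcal{A}}^{sa}$. Such a completion exists and is unique up to a $^*$-isomorphism fixing $\mathcal{A}$ (Hamana). *)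

theory Defs
  imports Complex_Main
begin

class cstar_algebra = real_normed_algebra_1 + banach +
  fixes scaleC :: "complex \<Rightarrow> 'a \<Rightarrow> 'a"
    and adj :: "'a \<Rightarrow> 'a"
  assumes scaleC_add_right: "scaleC c (x + y) = scaleC c x + scaleC c y"
    and scaleC_add_left: "scaleC (c + d) x = scaleC c x + scaleC d x"
    and scaleC_scaleC: "scaleC c (scaleC d x) = scaleC (c * d) x"
    and scaleC_one: "scaleC 1 x = x"
    and scaleC_of_real: "scaleC (complex_of_real r) x = scaleR r x"
    and scaleC_mult_left: "scaleC c (x * y) = scaleC c x * y"
    and scaleC_mult_right: "scaleC c (x * y) = x * scaleC c y"
    and norm_scaleC: "norm (scaleC c x) = cmod c * norm x"
    and adj_adj: "adj (adj x) = x"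
    and adj_add: "adj (x + y) = adj x + adj y"
    and adj_scaleC: "adj (scaleC c x) = scaleC (cnj c) (adj x)"
    and adj_mult: "adj (x * y) = adj y * adj x"
    and cstar_identity: "norm (adj x * x) = norm x ^ 2"

definition sa :: "'a::cstar_algebra set" where
  "sa = {x. adj x = x}"

definition cinvertible :: "'a::cstar_algebra \<Rightarrow> bool" where
  "cinvertible x \<longleftrightarrow> (\<exists>y. x * y = 1 \<and> y * x = 1)"

definition cspectrum :: "'a::cstar_algebra \<Rightarrow> complex set" where
  "cspectrum x = {c. \<not> cinvertible (x - scaleC c 1)}"

definition cpositive :: "'a::cstar_algebra \<Rightarrow> bool" where
  "cpositive x \<longleftrightarrow> x \<in> sa \<and> cspectrum x \<subseteq> {z. z \<in> \<real> \<and> 0 \<le> Re z}"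

definition sa_le :: "'a::cstar_algebra \<Rightarrow> 'a \<Rightarrow> bool" where
  "sa_le a b \<longleftrightarrow> cpositive (b - a)"

definition is_sup_sa :: "'a::cstar_algebra set \<Rightarrow> 'a \<Rightarrow> bool" where
  "is_sup_sa S s \<longleftrightarrow> s \<in> sa \<and> (\<forall>x\<in>S. sa_le x s) \<and>
     (\<forall>u\<in>sa. (\<forall>x\<in>S. sa_le x u) \<longrightarrow> sa_le s u)"

definition is_inf_sa :: "'a::cstar_algebra set \<Rightarrow> 'a \<Rightarrow> bool" where
  "is_inf_sa S s \<longleftrightarrow> s \<in> sa \<and> (\<forall>x\<in>S. sa_le s x) \<and>
     (\<forall>u\<in>sa. (\<forall>x\<in>S. sa_le u x) \<longrightarrow> sa_le u s)"

text \<open>Ranges of bounded increasing (decreasing) nets of self-adjoint elements are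
  exactly the nonempty upward (downward) directed bounded subsets of the
  self-adjoint part; the supremum of a net is the supremum of its range.\<close>
definition up_directed_bdd :: "'a::cstar_algebra set \<Rightarrow> bool" where
  "up_directed_bdd D \<longleftrightarrow> D \<subseteq> sa \<and> D \<noteq> {} \<and>
     (\<forall>x\<in>D. \<forall>y\<in>D. \<exists>z\<in>D. sa_le x z \<and> sa_le y z) \<and>
     (\<exists>u\<in>sa. \<forall>x\<in>D. sa_le x u)"

definition down_directed_bdd :: "'a::cstar_algebra set \<Rightarrow> bool" where
  "down_directed_bdd D \<longleftrightarrow> D \<subseteq> sa \<and> D \<noteq> {} \<and>
     (\<forall>x\<in>D. \<forall>y\<in>D. \<exists>z\<in>D. sa_le z x \<and> sa_le z y) \<and>
     (\<exists>u\<in>sa. \<forall>x\<in>D. sa_le u x)"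

definition monotone_complete :: "'a::cstar_algebra itself \<Rightarrow> bool" where
  "monotone_complete _ \<longleftrightarrow>
     (\<forall>D::'a set. up_directed_bdd D \<longrightarrow> (\<exists>s. is_sup_sa D s))"

definition unital_star_mono :: "('a::cstar_algebra \<Rightarrow> 'b::cstar_algebra) \<Rightarrow> bool" where
  "unital_star_mono i \<longleftrightarrow> inj i \<and> i 1 = 1 \<and>
     (\<forall>x y. i (x + y) = i x + i y) \<and> (\<forall>x y. i (x * y) = i x * i y) \<and>
     (\<forall>c x. i (scaleC c x) = scaleC c (i x)) \<and> (\<forall>x. i (adj x) = adj (i x))"

definition monotone_closed :: "'b::cstar_algebra set \<Rightarrow> bool" where
  "monotone_closed S \<longleftrightarrow> S \<subseteq> sa \<and>
     (\<forall>D\<subseteq>S. \<forall>s. up_directed_bdd D \<and> is_sup_sa D s \<longrightarrow> s \<in> S) \<and>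
     (\<forall>D\<subseteq>S. \<forall>s. down_directed_bdd D \<and> is_inf_sa D s \<longrightarrow> s \<in> S)"

definition monotone_closure :: "'b::cstar_algebra set \<Rightarrow> 'b set" where
  "monotone_closure X = \<Inter>{S. X \<subseteq> S \<and> monotone_closed S}"

definition regular_monotone_completion ::
    "('a::cstar_algebra \<Rightarrow> 'b::cstar_algebra) \<Rightarrow> bool" where
  "regular_monotone_completion i \<longleftrightarrow>
     unital_star_mono i \<and> monotone_complete TYPE('b) \<and>
     monotone_closure (i ` sa) = (sa :: 'b set) \<and>
     (\<forall>b\<in>(sa :: 'b set). is_sup_sa {i a | a. a \<in> sa \<and> sa_le (i a) b} b) \<and>
     (\<forall>S s. S \<subseteq> (sa :: 'a set) \<and> is_sup_sa S s \<longrightarrow> is_sup_sa (i ` S) (i s))"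

definition order_iso_sa ::
    "('a::cstar_algebra \<Rightarrow> 'b::cstar_algebra) \<Rightarrow> bool" where
  "order_iso_sa f \<longleftrightarrow> bij_betw f (sa :: 'a set) (sa :: 'b set) \<and>
     (\<forall>x\<in>(sa :: 'a set). \<forall>y\<in>sa. sa_le x y \<longleftrightarrow> sa_le (f x) (f y))"

end

theory Submission
  imports Defs "HOL-Analysis.Analysis" "HOL-Computational_Algebra.Fundamental_Theorem_Algebra"
begin

interpretation cs: vector_space "scaleC :: complex \<Rightarrow> 'a \<Rightarrow> 'a::cstar_algebra"
  by unfold_locales (simp_all add: scaleC_add_right scaleC_add_left scaleC_scaleC scaleC_one)

lemma scaleC_1_mult: "scaleC c 1 * x = scaleC c (x::'a::cstar_algebra)"
  by (metis scaleC_mult_left mult_1_left)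
lemma mult_scaleC_1: "x * scaleC c 1 = scaleC c (x::'a::cstar_algebra)"
  by (metis scaleC_mult_right mult_1_right)
lemma scaleC_1_commute: "scaleC c 1 * x = x * scaleC c (1::'a::cstar_algebra)"
  by (simp add: scaleC_1_mult mult_scaleC_1)

lemma adj_one[simp]: "adj (1::'a::cstar_algebra) = 1"
proof -
  have "adj 1 * y = y" for y::'a
  proof -
    have "adj (adj y * 1) = adj 1 * y" by (simp only: adj_mult adj_adj)
    then show ?thesis by (simp add: adj_adj)
  qed
  from this[of 1] show ?thesis by simp
qed
lemma adj_zero[simp]: "adj (0::'a::cstar_algebra) = 0"
proof -
  have "adj (0::'a) = adj 0 + adj 0" using adj_add[of "0::'a" 0] by simp
  then show ?thesis by simp
qed
lemma adj_minus: "adj (- x) = - adj (x::'a::cstar_algebra)"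
proof -
  have h: "adj x + adj (-x) = 0" using adj_add[of x "-x"] by simp
  have "adj (-x) = - adj x + (adj x + adj (-x))" by simp
  also have "\<dots> = - adj x" using h by simp
  finally show ?thesis .
qed
lemma adj_diff: "adj (x - y) = adj x - adj (y::'a::cstar_algebra)"
  by (simp only: diff_conv_add_uminus adj_add adj_minus)
lemma adj_scaleR: "adj (scaleR r x) = scaleR r (adj (x::'a::cstar_algebra))"
  by (simp add: scaleC_of_real[symmetric] adj_scaleC)
lemma adj_sum: "adj (sum f A) = (\<Sum>i\<in>A. adj (f i::'a::cstar_algebra))"
  by (induct A rule: infinite_finite_induct) (auto simp: adj_add)
lemma adj_power: "adj (x ^ n) = adj (x::'a::cstar_algebra) ^ n"
  by (induct n) (auto simp: adj_mult power_commutes)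

lemma norm_adj: "norm (adj x) = norm (x::'a::cstar_algebra)"
proof -
  have *: "norm y \<le> norm (adj y)" for y :: 'a
  proof (cases "norm y = 0")
    case False
    have "norm y ^ 2 = norm (adj y * y)" by (simp add: cstar_identity)
    also have "\<dots> \<le> norm (adj y) * norm y" by (rule norm_mult_ineq)
    finally show ?thesis using False by (simp add: power2_eq_square)
  qed simp
  show ?thesis using *[of x] *[of "adj x"] by (simp add: adj_adj)
qed

lemma sa_iff: "x \<in> sa \<longleftrightarrow> adj x = x" by (simp add: sa_def)
lemma sa_add: "x \<in> sa \<Longrightarrow> y \<in> sa \<Longrightarrow> x + y \<in> sa" by (simp add: sa_def adj_add)
lemma sa_diff: "x \<in> sa \<Longrightarrow> y \<in> sa \<Longrightarrow> x - y \<in> sa" by (simp add: sa_def adj_diff)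
lemma sa_minus: "x \<in> sa \<Longrightarrow> - x \<in> sa" by (simp add: sa_def adj_minus)
lemma sa_minus_iff: "- x \<in> sa \<longleftrightarrow> x \<in> sa"
  by (metis sa_minus minus_minus)
lemma sa_scaleR: "x \<in> sa \<Longrightarrow> scaleR r x \<in> sa" by (simp add: sa_def adj_scaleR)
lemma sa_one: "1 \<in> sa" by (simp add: sa_def)
lemma sa_zero: "0 \<in> sa" by (simp add: sa_def)
lemma sa_power: "x \<in> sa \<Longrightarrow> x ^ n \<in> sa" by (simp add: sa_def adj_power)
lemma sa_scaleC_real: "x \<in> sa \<Longrightarrow> scaleC (of_real r) x \<in> sa" by (simp add: sa_scaleR scaleC_of_real)

lemma norm_sq_sa: "x \<in> sa \<Longrightarrow> norm (x * x) = norm x ^ 2"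
  by (metis cstar_identity sa_iff)

lemma norm_pow2_sa: "x \<in> sa \<Longrightarrow> norm (x ^ (2 ^ m)) = norm x ^ (2 ^ m)"
proof (induct m)
  case (Suc m)
  have "x ^ (2 ^ Suc m) = x ^ (2^m) * x ^ (2^m)"
    by (simp add: power_add[symmetric] mult_2)
  then have "norm (x ^ (2 ^ Suc m)) = norm (x ^ (2^m)) ^ 2"
    using norm_sq_sa[OF sa_power[OF Suc.prems]] by simp
  then show ?case using Suc by (simp add: power_mult[symmetric] mult.commute)
qed simp

lemma cinvertibleI: "x * y = 1 \<Longrightarrow> y * x = 1 \<Longrightarrow> cinvertible x"
  unfolding cinvertible_def by blast

lemma cinvertible_mult: "cinvertible x \<Longrightarrow> cinvertible y \<Longrightarrow> cinvertible (x * y)"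
  unfolding cinvertible_def
proof (elim exE conjE)
  fix x' y' assume a: "x * x' = 1" "x' * x = 1" "y * y' = 1" "y' * y = 1"
  have "(x * y) * (y' * x') = x * (y * y') * x'" by (simp only: mult.assoc)
  also have "\<dots> = 1" using a by simp
  finally have 1: "(x * y) * (y' * x') = 1" .
  have "(y' * x') * (x * y) = y' * (x' * x) * y" by (simp only: mult.assoc)
  also have "\<dots> = 1" using a by simp
  finally have 2: "(y' * x') * (x * y) = 1" .
  from 1 2 show "\<exists>z. x * y * z = 1 \<and> z * (x * y) = 1" by blast
qed

lemma cinvertible_one: "cinvertible 1" by (rule cinvertibleI[of 1 1]) simp_all

lemma cinvertible_scaleC1: "c \<noteq> 0 \<Longrightarrow> cinvertible (scaleC c (1::'a::cstar_algebra))"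
  by (rule cinvertibleI[of _ "scaleC (inverse c) 1"]) (simp_all add: scaleC_1_mult scaleC_scaleC scaleC_one)

lemma cinvertible_scaleC: "c \<noteq> 0 \<Longrightarrow> cinvertible (x::'a::cstar_algebra) \<Longrightarrow> cinvertible (scaleC c x)"
  using cinvertible_mult[OF cinvertible_scaleC1] by (simp add: scaleC_1_mult)

lemma cinvertible_minus1: "cinvertible x \<Longrightarrow> cinvertible (- x)"
  unfolding cinvertible_def
proof (elim exE conjE)
  fix y assume "x * y = 1" "y * x = 1"
  then have "(- x) * (- y) = 1" "(- y) * (- x) = 1" by simp_all
  then show "\<exists>z. - x * z = 1 \<and> z * - x = 1" by blast
qed

lemma cinvertible_minus: "cinvertible (- x) \<longleftrightarrow> cinvertible x"
  using cinvertible_minus1[of x] cinvertible_minus1[of "-x"] by auto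

lemma cinvertible_comm_left:
  assumes "x * y = y * x" "cinvertible (x * y)"
  shows "cinvertible x"
proof -
  obtain z where z: "x * y * z = 1" "z * (x * y) = 1" using assms(2) cinvertible_def by blast
  have r: "x * (y * z) = 1" using z(1) by (simp add: mult.assoc)
  have "(z * y) * x = z * (x * y)" using assms(1) by (simp add: mult.assoc)
  then have l: "(z * y) * x = 1" using z(2) by simp
  have "z * y = (z * y) * (x * (y * z))" using r by simp
  also have "\<dots> = ((z * y) * x) * (y * z)" by (simp only: mult.assoc)
  also have "\<dots> = y * z" using l by simp
  finally have "(y * z) * x = 1" using l by simp
  then show ?thesis by (rule cinvertibleI[OF r])
qed

lemma cinvertible_comm_right:
  assumes "x * y = y * x" "cinvertible (x * y)"
  shows "cinvertible y"
  using cinvertible_comm_left[of y x] assms by simp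

definition cinv :: "'a::cstar_algebra \<Rightarrow> 'a" where
  "cinv x = (SOME y. x * y = 1 \<and> y * x = 1)"

lemma cinv: "cinvertible x \<Longrightarrow> x * cinv x = 1 \<and> cinv x * x = 1"
  unfolding cinv_def cinvertible_def by (rule someI_ex)

section \<open>Neumann series\<close>

lemma geom_tele_left: "(1 - x) * (\<Sum>n<N. x ^ n) = 1 - (x::'a::ring_1) ^ N"
proof (induct N)
  case (Suc N)
  have "(1 - x) * (\<Sum>n<Suc N. x ^ n) = (1 - x) * (\<Sum>n<N. x ^ n) + (1 - x) * x ^ N"
    by (simp add: distrib_left)
  also have "\<dots> = 1 - x^N + (x^N - x * x^N)" using Suc by (simp add: left_diff_distrib)
  also have "\<dots> = 1 - x ^ Suc N" by simp
  finally show ?case .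
qed simp
lemma geom_tele_right: "(\<Sum>n<N. x ^ n) * (1 - x) = 1 - (x::'a::ring_1) ^ N"
proof (induct N)
  case (Suc N)
  have "(\<Sum>n<Suc N. x ^ n) * (1 - x) = (\<Sum>n<N. x ^ n) * (1 - x) + x ^ N * (1 - x)"
    by (simp add: distrib_right)
  also have "\<dots> = 1 - x^N + (x^N - x^N * x)" using Suc by (simp add: right_diff_distrib)
  also have "\<dots> = 1 - x ^ Suc N" by (simp add: power_commutes)
  finally show ?case .
qed simp

lemma neumann:
  fixes x :: "'a::cstar_algebra"
  assumes "norm x < 1"
  shows "cinvertible (1 - x)"
proof -
  have sg: "summable (\<lambda>n. norm x ^ n)" using assms by (simp add: summable_geometric)
  have sm: "summable (\<lambda>n. x ^ n)"
    by (rule summable_comparison_test'[OF sg]) (rule norm_power_ineq)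
  define s where "s = suminf (\<lambda>n. x ^ n)"
  have L: "(\<lambda>N. \<Sum>n<N. x ^ n) \<longlonglongrightarrow> s" using sm s_def summable_LIMSEQ by blast
  have P: "(\<lambda>N. x ^ N) \<longlonglongrightarrow> 0"
  proof (rule Lim_null_comparison)
    show "\<forall>\<^sub>F N in sequentially. norm (x ^ N) \<le> norm x ^ N" by (simp add: norm_power_ineq)
    show "(\<lambda>N. norm x ^ N) \<longlonglongrightarrow> 0" using assms by (simp add: LIMSEQ_power_zero)
  qed
  have P1: "(\<lambda>N. 1 - x ^ N) \<longlonglongrightarrow> 1" using tendsto_diff[OF tendsto_const P] by simp
  have "(\<lambda>N. (1 - x) * (\<Sum>n<N. x ^ n)) \<longlonglongrightarrow> (1 - x) * s" by (rule tendsto_mult_left[OF L])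
  then have a: "(1 - x) * s = 1" using P1 by (simp add: geom_tele_left LIMSEQ_unique)
  have "(\<lambda>N. (\<Sum>n<N. x ^ n) * (1 - x)) \<longlonglongrightarrow> s * (1 - x)" by (rule tendsto_mult_right[OF L])
  then have b: "s * (1 - x) = 1" using P1 by (simp add: geom_tele_right LIMSEQ_unique)
  show ?thesis using a b by (rule cinvertibleI)
qed

lemma scaleC_sub_eq:
  "c \<noteq> 0 \<Longrightarrow> scaleC c 1 - x = scaleC c (1 - scaleC (inverse c) (x::'a::cstar_algebra))"
  by (simp add: cs.scale_right_diff_distrib scaleC_scaleC scaleC_one)

lemma cinvertible_swap: "cinvertible (x - y) \<longleftrightarrow> cinvertible (y - x)"
  by (metis cinvertible_minus minus_diff_eq)

lemma spec_norm:
  fixes x :: "'a::cstar_algebra"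
  assumes "c \<in> cspectrum x"
  shows "cmod c \<le> norm x"
proof (rule ccontr)
  assume "\<not> cmod c \<le> norm x"
  then have lt: "norm x < cmod c" by simp
  then have c0: "c \<noteq> 0" by auto
  have "norm (scaleC (inverse c) x) = norm x / cmod c"
    by (simp add: norm_scaleC norm_inverse divide_inverse mult.commute)
  also have "\<dots> < 1" using lt c0 by simp
  finally have "norm (scaleC (inverse c) x) < 1" .
  then have "cinvertible (scaleC c (1 - scaleC (inverse c) x))"
    using c0 by (simp add: neumann cinvertible_scaleC)
  then have "cinvertible (scaleC c 1 - x)" using c0 by (simp add: scaleC_sub_eq)
  then have "cinvertible (x - scaleC c 1)" by (simp add: cinvertible_swap)
  then show False using assms by (simp add: cspectrum_def)
qed

lemma perturb:
  fixes a :: "'a::cstar_algebra"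
  assumes "cinvertible a"
  shows "\<exists>e>0. \<forall>b. norm (b - a) < e \<longrightarrow> cinvertible b"
proof -
  obtain w where w: "a * w = 1" "w * a = 1" using assms cinvertible_def by blast
  define e where "e = 1 / (norm w + 1)"
  have "norm w + 1 > 0" using norm_ge_zero[of w] by linarith
  then have e0: "e > 0" by (simp add: e_def)
  have "cinvertible b" if "norm (b - a) < e" for b
  proof -
    have "norm (w * (a - b)) \<le> norm w * norm (a - b)" by (rule norm_mult_ineq)
    also have "\<dots> \<le> norm w * e" using that by (simp add: mult_left_mono norm_minus_commute)
    also have "\<dots> = norm w / (norm w + 1)" by (simp add: e_def)
    also have "\<dots> < 1" using \<open>norm w + 1 > 0\<close> by simp
    finally have "cinvertible (1 - w * (a - b))" by (rule neumann)
    then have "cinvertible (a * (1 - w * (a - b)))" using assms cinvertible_mult by blast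
    moreover have "a * (1 - w * (a - b)) = b"
      by (simp add: right_diff_distrib mult.assoc[symmetric] w(1))
    ultimately show ?thesis by simp
  qed
  then show ?thesis using e0 by blast
qed

lemma spec_open:
  fixes x :: "'a::cstar_algebra"
  assumes "c \<notin> cspectrum x"
  shows "\<exists>e>0. \<forall>c'. cmod (c' - c) < e \<longrightarrow> c' \<notin> cspectrum x"
proof -
  have "cinvertible (x - scaleC c 1)" using assms by (simp add: cspectrum_def)
  then obtain e where e: "e > 0" "\<forall>b. norm (b - (x - scaleC c 1)) < e \<longrightarrow> cinvertible b"
    using perturb by blast
  have "c' \<notin> cspectrum x" if "cmod (c' - c) < e" for c'
  proof -
    have "(x - scaleC c' 1) - (x - scaleC c 1) = scaleC (c - c') (1::'a)"
      by (simp add: cs.scale_left_diff_distrib)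
    then have "norm ((x - scaleC c' 1) - (x - scaleC c 1)) = cmod (c' - c)"
      by (simp add: norm_scaleC norm_minus_commute)
    then show ?thesis using e that by (simp add: cspectrum_def)
  qed
  then show ?thesis using e by blast
qed

lemma inv_cont:
  fixes a a' :: "'a::cstar_algebra"
  assumes "cinvertible a" "cinvertible a'" "norm (a - a') * norm (cinv a) \<le> 1/2"
  shows "norm (cinv a' - cinv a) \<le> 2 * norm (cinv a) ^ 2 * norm (a - a')"
proof -
  have ia: "a * cinv a = 1" "cinv a * a = 1" using cinv[OF assms(1)] by auto
  have ia': "a' * cinv a' = 1" "cinv a' * a' = 1" using cinv[OF assms(2)] by auto
  have "cinv a' * (a - a') * cinv a = cinv a' * (a * cinv a) - (cinv a' * a') * cinv a"
    by (simp add: algebra_simps)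
  then have eq: "cinv a' - cinv a = cinv a' * (a - a') * cinv a" by (simp add: ia ia')
  define d where "d = norm (cinv a' - cinv a)"
  define k where "k = norm (a - a') * norm (cinv a)"
  have "d \<le> norm (cinv a') * norm (a - a') * norm (cinv a)"
    unfolding d_def eq by (metis norm_mult_ineq order_trans mult_right_mono norm_ge_zero)
  also have "norm (cinv a') \<le> norm (cinv a) + d"
    unfolding d_def by (metis add.commute diff_add_cancel norm_triangle_ineq)
  then have "norm (cinv a') * norm (a - a') * norm (cinv a) \<le> (norm (cinv a) + d) * k"
    unfolding k_def by (simp add: mult.assoc mult_right_mono)
  finally have "d \<le> (norm (cinv a) + d) * k" .
  then have "d * (1 - k) \<le> norm (cinv a) * k" by (simp add: algebra_simps)
  moreover have "k \<le> 1/2" using assms(3) k_def by simp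
  moreover have "d \<ge> 0" "k \<ge> 0" by (simp_all add: d_def k_def)
  ultimately have "d * (1/2) \<le> d * (1 - k)" by (intro mult_left_mono) auto
  with \<open>d * (1 - k) \<le> norm (cinv a) * k\<close> have "d \<le> 2 * norm (cinv a) * k" by simp
  then show ?thesis by (simp add: d_def k_def power2_eq_square mult_ac)
qed



lemma scaleC_pow: "scaleC c y ^ m = scaleC (c ^ m) (y ^ m :: 'a::cstar_algebra)"
  by (induct m) (simp_all add: scaleC_one scaleC_mult_left[symmetric] scaleC_mult_right[symmetric] scaleC_scaleC)

lemma roots_sum:
  assumes K: "K > 0" and m: "m < K"
  shows "(\<Sum>j<K. cis (2*pi/K) ^ (j*m)) = (if m = 0 then of_nat K else 0)"
proof (cases "m = 0")
  case False
  define z where "z = cis (2*pi/K) ^ m"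
  have zc: "z = cis (real m * (2*pi/K))" by (simp only: z_def Complex.DeMoivre)
  have "z \<noteq> 1"
  proof
    assume "z = 1"
    then have "cos (real m * (2*pi/K)) = 1" using zc by (simp add: complex_eq_iff)
    then obtain k :: int where k: "real m * (2*pi/K) = of_int k * (2*pi)"
      by (auto simp: cos_one_2pi_int)
    then have "real m = of_int k * real K" using K by (simp add: field_simps)
    then have km: "int m = k * int K" by (metis of_int_eq_iff of_int_mult of_int_of_nat_eq)
    have "0 < k * int K" using km False by simp
    then have "k > 0" using K by (simp add: zero_less_mult_iff)
    then have "int K \<le> k * int K" using mult_right_mono[of 1 k "int K"] by simp
    moreover have "int m < int K" using m by simp
    ultimately show False using km by linarith
  qed
  have zK: "z ^ K = 1"
  proof -
    have "z ^ K = cis (real K * (real m * (2*pi/K)))" by (simp add: zc Complex.DeMoivre)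
    also have "real K * (real m * (2*pi/K)) = real m * (2*pi)" using K by simp
    also have "cis (real m * (2*pi)) = 1"
      by (metis Complex.DeMoivre cis_2pi power_one)
    finally show ?thesis .
  qed
  have "(\<Sum>j<K. cis (2*pi/K) ^ (j*m)) = (\<Sum>j<K. z ^ j)"
    by (simp add: z_def power_mult[symmetric] mult.commute)
  also have "\<dots> = 0" using \<open>z \<noteq> 1\<close> zK by (simp add: geometric_sum)
  finally show ?thesis using False by simp
qed simp

lemma gelfand_bound:
  fixes y :: "'a::cstar_algebra"
  assumes R: "\<And>\<mu>. cmod \<mu> < R \<Longrightarrow> cinvertible (1 - scaleC \<mu> y)"
    and rho: "0 \<le> \<rho>" "\<rho> < R"
  shows "\<exists>C. \<forall>K. \<rho> ^ K * norm (y ^ K) \<le> C"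
proof -
  define f where "f \<mu> = cinv (1 - scaleC \<mu> y)" for \<mu>
  have finv: "f \<mu> * (1 - scaleC \<mu> y) = 1" if "cmod \<mu> < R" for \<mu>
    using cinv[OF R[OF that]] f_def by simp
  define \<rho>1 where "\<rho>1 = (\<rho> + R) / 2"
  have \<rho>1: "\<rho> < \<rho>1" "\<rho>1 < R" using rho by (auto simp: \<rho>1_def)
  have cont: "continuous_on {w. cmod w < R} f"
    unfolding continuous_on_iff
  proof (intro ballI allI impI)
    fix \<mu>0 :: complex and e :: real
    assume l0: "\<mu>0 \<in> {w. cmod w < R}" and e: "0 < e"
    define B where "B = norm (f \<mu>0)"
    define Y where "Y = norm y + 1"
    have Y: "Y > 0" "norm y \<le> Y" using norm_ge_zero[of y] unfolding Y_def by linarith+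
    have B: "B \<ge> 0" by (simp add: B_def)
    have B1: "B + 1 > 0" "B + 1 \<noteq> 0" using B by linarith+
    define d where "d = min (e / (2 * (B+1)^2 * Y)) (1 / (2 * (B+1) * Y))"
    have p1: "2 * (B+1)^2 * Y > 0" using Y B by (intro mult_pos_pos) auto
    have p2: "2 * (B+1) * Y > 0" using Y B by (intro mult_pos_pos) auto
    have dpos: "d > 0" using p1 p2 e by (simp add: d_def)
    show "\<exists>d>0. \<forall>x'\<in>{w. cmod w < R}. dist x' \<mu>0 < d \<longrightarrow> dist (f x') (f \<mu>0) < e"
    proof (intro exI[of _ d] conjI ballI impI dpos)
      fix \<mu> assume l: "\<mu> \<in> {w. cmod w < R}" and dl: "dist \<mu> \<mu>0 < d"
      define c where "c = cmod (\<mu> - \<mu>0)"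
      have c: "c < d" "c \<ge> 0" using dl by (simp_all add: c_def dist_complex_def)
      have diff: "(1 - scaleC \<mu>0 y) - (1 - scaleC \<mu> y) = scaleC (\<mu> - \<mu>0) y"
        by (simp add: cs.scale_left_diff_distrib)
      have nd: "norm ((1 - scaleC \<mu>0 y) - (1 - scaleC \<mu> y)) \<le> c * Y"
        unfolding diff norm_scaleC c_def using Y by (simp add: mult_left_mono)
      have cY: "c * Y * (B + 1) \<le> 1/2"
      proof -
        have "c * Y * (B + 1) \<le> (1 / (2 * (B+1) * Y)) * Y * (B + 1)"
          using c Y B by (intro mult_right_mono) (auto simp: d_def)
        also have "\<dots> = 1/2" using p2 by (simp add: field_simps)
        finally show ?thesis .
      qed
      have h: "norm ((1 - scaleC \<mu>0 y) - (1 - scaleC \<mu> y)) * norm (cinv (1 - scaleC \<mu>0 y)) \<le> 1/2"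
      proof -
        have "norm ((1 - scaleC \<mu>0 y) - (1 - scaleC \<mu> y)) * B \<le> c * Y * (B + 1)"
          using nd B c Y by (intro mult_mono) auto
        then show ?thesis using cY by (simp add: B_def f_def)
      qed
      have "norm (f \<mu> - f \<mu>0) \<le> 2 * B ^ 2 * norm ((1 - scaleC \<mu>0 y) - (1 - scaleC \<mu> y))"
        unfolding f_def B_def using inv_cont[OF R R h] l l0 by (simp add: f_def)
      also have "\<dots> \<le> 2 * (B+1)^2 * (c * Y)"
        using nd B by (intro mult_mono) (auto intro: power_mono)
      also have "\<dots> < 2 * (B+1)^2 * (d * Y)"
        using c Y B by (intro mult_strict_left_mono mult_strict_right_mono) auto
      also have "\<dots> \<le> e"
      proof -
        have "d \<le> e / (2 * (B+1)^2 * Y)" by (simp add: d_def)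
        then have "2 * (B+1)^2 * Y * d \<le> 2 * (B+1)^2 * Y * (e / (2 * (B+1)^2 * Y))"
          using Y B by (intro mult_left_mono) auto
        also have "\<dots> = e" using p1 Y B1 by (simp add: field_simps)
        finally show ?thesis by (simp add: mult_ac)
      qed
      finally show "dist (f \<mu>) (f \<mu>0) < e" by (simp add: dist_norm)
    qed
  qed
  have sub: "cball 0 \<rho>1 \<subseteq> {w. cmod w < R}" using \<rho>1 by auto
  have uc: "uniformly_continuous_on (cball 0 \<rho>1) f"
    by (rule compact_uniformly_continuous[OF continuous_on_subset[OF cont sub]]) simp
  obtain \<delta> where \<delta>: "\<delta> > 0"
    and \<delta>u: "\<And>x x'. x \<in> cball 0 \<rho>1 \<Longrightarrow> x' \<in> cball 0 \<rho>1 \<Longrightarrow> dist x' x < \<delta> \<Longrightarrow> dist (f x') (f x) < 1/4"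
    using uc unfolding uniformly_continuous_on_def
    by (metis divide_pos_pos zero_less_numeral zero_less_one)
  define g where "g r K = scaleR (1 / real K) (\<Sum>j<K. f (cis (2*pi/K) ^ j * of_real r))" for r K
  have gid: "g r K * (1 - scaleC (of_real r ^ K) (y ^ K)) = 1"
    if K: "K > 0" and r: "0 \<le> r" "r \<le> \<rho>1" for r K
  proof -
    define \<omega> where "\<omega> = cis (2*pi/K)"
    have \<omega>K: "\<omega> ^ K = 1"
    proof -
      have "\<omega> ^ K = cis (real K * (2*pi/K))" by (simp add: \<omega>_def Complex.DeMoivre)
      also have "real K * (2*pi/K) = 2*pi" using K by simp
      finally show ?thesis by simp
    qed
    have cm: "cmod (\<omega> ^ j * of_real r) = r" for j
      using r by (simp add: \<omega>_def norm_mult norm_power)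
    have each: "f (\<omega> ^ j * of_real r) * (1 - scaleC (of_real r ^ K) (y ^ K))
        = (\<Sum>m<K. scaleC ((\<omega> ^ j * of_real r) ^ m) (y ^ m))" for j
    proof -
      define \<mu> where "\<mu> = \<omega> ^ j * of_real r"
      have lK: "\<mu> ^ K = of_real r ^ K"
        by (simp add: \<mu>_def power_mult_distrib power_mult[symmetric] mult.commute[of j K] power_mult \<omega>K)
      have "(1 - scaleC \<mu> y) * (\<Sum>m<K. scaleC (\<mu> ^ m) (y ^ m)) = 1 - scaleC (of_real r ^ K) (y ^ K)"
        using geom_tele_left[of "scaleC \<mu> y" K] by (simp add: scaleC_pow lK)
      then have "f \<mu> * (1 - scaleC (of_real r ^ K) (y ^ K)) = (f \<mu> * (1 - scaleC \<mu> y)) * (\<Sum>m<K. scaleC (\<mu> ^ m) (y ^ m))"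
        by (simp add: mult.assoc)
      also have "\<dots> = (\<Sum>m<K. scaleC (\<mu> ^ m) (y ^ m))"
        using finv[of \<mu>] cm[of j] r \<rho>1 by (simp add: \<mu>_def)
      finally show ?thesis by (simp add: \<mu>_def)
    qed
    have "(\<Sum>j<K. f (\<omega> ^ j * of_real r)) * (1 - scaleC (of_real r ^ K) (y ^ K))
        = (\<Sum>j<K. \<Sum>m<K. scaleC (\<omega> ^ (j*m) * of_real r ^ m) (y ^ m))"
      by (simp add: sum_distrib_right each power_mult_distrib power_mult)
    also have "\<dots> = (\<Sum>m<K. \<Sum>j<K. scaleC (\<omega> ^ (j*m) * of_real r ^ m) (y ^ m))"
      by (rule sum.swap)
    also have "\<dots> = (\<Sum>m<K. scaleC ((\<Sum>j<K. \<omega> ^ (j*m)) * of_real r ^ m) (y ^ m))"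
      by (simp add: sum_distrib_right cs.scale_sum_left)
    also have "\<dots> = (\<Sum>m<K. if m = 0 then scaleC (of_nat K) 1 else 0)"
      by (intro sum.cong refl) (simp add: \<omega>_def roots_sum[OF K])
    also have "\<dots> = scaleC (of_nat K) 1" using K by (simp add: sum.delta)
    finally have "(\<Sum>j<K. f (\<omega> ^ j * of_real r)) * (1 - scaleC (of_real r ^ K) (y ^ K)) = scaleC (of_nat K) 1" .
    moreover have "scaleC (of_nat K) (1::'a) = scaleR (real K) 1"
      by (metis of_real_of_nat_eq scaleC_of_real)
    ultimately show ?thesis using K
      by (simp add: g_def \<omega>_def mult_scaleR_left)
  qed
  define Q where "Q r \<longleftrightarrow> (\<exists>C. \<forall>K. r ^ K * norm (y ^ K) \<le> C)" for r
  have KS: "Q r" if r'': "0 \<le> r''" "r'' \<le> \<rho>1" and r: "0 \<le> r" "r \<le> \<rho>1" and rr: "\<bar>r - r''\<bar> < \<delta>"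
    and lim: "(\<lambda>K. r'' ^ K * norm (y ^ K)) \<longlonglongrightarrow> 0" for r r''
  proof -
    obtain N where N: "\<And>K. K \<ge> N \<Longrightarrow> r'' ^ K * norm (y ^ K) < 1/5"
      using order_tendstoD(2)[OF lim, of "1/5"] by (auto simp: eventually_sequentially)
    define N' where "N' = max N 1"
    have bnd: "r ^ K * norm (y ^ K) \<le> 3" if KN: "K \<ge> N'" for K
    proof -
      have K: "K > 0" using KN by (simp add: N'_def)
      define u where "u = 1 - scaleC (of_real r ^ K) (y ^ K)"
      define u'' where "u'' = 1 - scaleC (of_real r'' ^ K) (y ^ K)"
      define G where "G = g r K"
      define G'' where "G'' = g r'' K"
      have Gu: "G * u = 1" using gid[OF K r] by (simp add: G_def u_def)
      have Gu'': "G'' * u'' = 1" using gid[OF K r''] by (simp add: G''_def u''_def)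
      have GG: "norm (G - G'') \<le> 1/4"
      proof -
        have "G - G'' = scaleR (1 / real K) (\<Sum>j<K. f (cis (2*pi/K) ^ j * of_real r) - f (cis (2*pi/K) ^ j * of_real r''))"
          by (simp add: G_def G''_def g_def sum_subtractf scaleR_diff_right)
        moreover have "norm (\<Sum>j<K. f (cis (2*pi/K) ^ j * of_real r) - f (cis (2*pi/K) ^ j * of_real r'')) \<le> real K * (1/4)"
        proof -
          have "norm (f (cis (2*pi/K) ^ j * of_real r) - f (cis (2*pi/K) ^ j * of_real r'')) \<le> 1/4" for j
          proof -
            have m1: "cis (2*pi/K) ^ j * of_real r \<in> cball 0 \<rho>1" using r by (simp add: norm_mult norm_power)
            have m2: "cis (2*pi/K) ^ j * of_real r'' \<in> cball 0 \<rho>1" using r'' by (simp add: norm_mult norm_power)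
            have "dist (cis (2*pi/K) ^ j * of_real r) (cis (2*pi/K) ^ j * of_real r'') < \<delta>"
              using rr by (simp add: dist_norm right_diff_distrib[symmetric] norm_mult norm_power of_real_diff[symmetric] del: of_real_diff)
            from \<delta>u[OF m2 m1 this] show ?thesis by (simp add: dist_norm)
          qed
          then have "norm (\<Sum>j<K. f (cis (2*pi/K) ^ j * of_real r) - f (cis (2*pi/K) ^ j * of_real r''))
              \<le> (\<Sum>j<K. (1/4::real))"
            by (intro order_trans[OF norm_sum] sum_mono) auto
          then show ?thesis by simp
        qed
        ultimately show ?thesis using K by (simp add: field_simps)
      qed
      define e where "e = scaleC (of_real r'' ^ K) (y ^ K)"
      have ne: "norm e < 1/5" using N[of K] KN r'' by (simp add: e_def norm_scaleC norm_power N'_def)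
      have G''eq: "G'' = 1 + G'' * e"
      proof -
        have "G'' = G'' * (u'' + e)" by (simp add: u''_def e_def)
        also have "\<dots> = 1 + G'' * e" by (simp add: distrib_left Gu'')
        finally show ?thesis .
      qed
      have nG'': "norm G'' \<le> 5/4"
      proof -
        have "norm G'' \<le> 1 + norm G'' * norm e"
          using G''eq norm_triangle_ineq[of 1 "G'' * e"] norm_mult_ineq[of G'' e]
          by (metis (no_types, opaque_lifting) add_left_mono norm_one order_trans)
        also have "\<dots> \<le> 1 + norm G'' * (1/5)" using ne by (intro add_left_mono mult_left_mono) auto
        finally show ?thesis by simp
      qed
      have "norm (G'' - 1) \<le> 1/4"
      proof -
        have "norm (G'' - 1) = norm (G'' * e)" using G''eq by (metis add_diff_cancel_left')
        also have "\<dots> \<le> norm G'' * norm e" by (rule norm_mult_ineq)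
        also have "\<dots> \<le> (5/4) * (1/5)" using nG'' ne by (intro mult_mono) auto
        finally show ?thesis by simp
      qed
      then have nG: "norm (1 - G) \<le> 1/2"
        using GG norm_triangle_ineq[of "G'' - 1" "G - G''"] by (simp add: norm_minus_commute)
      have ueq: "u = 1 + (1 - G) * u" using Gu by (simp add: left_diff_distrib)
      have nu: "norm u \<le> 2"
      proof -
        have "norm u \<le> 1 + norm (1 - G) * norm u"
          using ueq norm_triangle_ineq[of 1 "(1 - G) * u"] norm_mult_ineq[of "1 - G" u]
          by (metis (no_types, opaque_lifting) add_left_mono norm_one order_trans)
        also have "\<dots> \<le> 1 + (1/2) * norm u" using nG by (intro add_left_mono mult_right_mono) auto
        finally show ?thesis by simp
      qed
      have "r ^ K * norm (y ^ K) = norm (1 - u)" using r by (simp add: u_def norm_scaleC norm_power)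
      also have "\<dots> \<le> norm (1::'a) + norm u" by (rule norm_triangle_ineq4)
      also have "\<dots> \<le> 3" using nu by simp
      finally show ?thesis .
    qed
    have "r ^ K * norm (y ^ K) \<le> 3 + (\<Sum>k<N'. r ^ k * norm (y ^ k))" for K
    proof (cases "K \<ge> N'")
      case True then show ?thesis using bnd[OF True] r
        by (smt (verit, ccfv_SIG) norm_ge_zero sum_nonneg zero_le_mult_iff zero_le_power)
    next
      case False
      then have "r ^ K * norm (y ^ K) \<le> (\<Sum>k<N'. r ^ k * norm (y ^ k))"
        using r by (intro member_le_sum) auto
      then show ?thesis by simp
    qed
    then show ?thesis unfolding Q_def by blast
  qed
  have Qdown: "(\<lambda>K. r'' ^ K * norm (y ^ K)) \<longlonglongrightarrow> 0" if "Q r" "0 \<le> r''" "r'' < r" for r r''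
  proof -
    obtain C where C: "\<And>K. r ^ K * norm (y ^ K) \<le> C" using \<open>Q r\<close> Q_def by blast
    have r0: "r > 0" using that by simp
    show ?thesis
    proof (rule Lim_null_comparison)
      show "\<forall>\<^sub>F K in sequentially. norm (r'' ^ K * norm (y ^ K)) \<le> (r''/r) ^ K * C"
      proof (intro always_eventually allI)
        fix K
        have "norm (r'' ^ K * norm (y ^ K)) = (r''/r) ^ K * (r ^ K * norm (y ^ K))"
          using r0 that by (simp add: power_divide)
        also have "\<dots> \<le> (r''/r) ^ K * C" using C that r0 by (intro mult_left_mono) auto
        finally show "norm (r'' ^ K * norm (y ^ K)) \<le> (r''/r) ^ K * C" .
      qed
      have "(\<lambda>K. (r''/r) ^ K) \<longlonglongrightarrow> 0" using that r0 by (intro LIMSEQ_power_zero) auto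
      then show "(\<lambda>K. (r''/r) ^ K * C) \<longlonglongrightarrow> 0" by (rule tendsto_mult_left_zero)
    qed
  qed
  have Qmono: "Q r'" if "Q r" "0 \<le> r'" "r' \<le> r" for r r'
  proof -
    obtain C where C: "\<And>K. r ^ K * norm (y ^ K) \<le> C" using \<open>Q r\<close> Q_def by blast
    have "r' ^ K * norm (y ^ K) \<le> C" for K
      using C[of K] that by (meson mult_right_mono norm_ge_zero order_trans power_mono)
    then show ?thesis by (auto simp: Q_def)
  qed
  define \<rho>s where "\<rho>s = 1 / (2 * (norm y + 1))"
  have d0: "2 * (norm y + 1) > 0" by (smt (verit) norm_ge_zero)
  have "\<rho>s * norm y = norm y / (2 * (norm y + 1))" by (simp add: \<rho>s_def)
  also have "\<dots> \<le> 1" using d0 by (simp add: pos_divide_le_eq)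
  finally have \<rho>s: "\<rho>s > 0" "\<rho>s * norm y \<le> 1" using d0 by (simp_all add: \<rho>s_def)
  have Qs: "Q \<rho>s"
  proof -
    have "\<rho>s ^ K * norm (y ^ K) \<le> 1" for K
    proof -
      have "\<rho>s ^ K * norm (y ^ K) \<le> \<rho>s ^ K * norm y ^ K"
        using \<rho>s by (intro mult_left_mono norm_power_ineq) auto
      also have "\<dots> = (\<rho>s * norm y) ^ K" by (simp add: power_mult_distrib)
      also have "\<dots> \<le> 1" using \<rho>s by (intro power_le_one) auto
      finally show ?thesis .
    qed
    then show ?thesis by (auto simp: Q_def)
  qed
  define \<delta>' where "\<delta>' = min \<delta> \<rho>s"
  have \<delta>': "\<delta>' > 0" "\<delta>' \<le> \<delta>" "\<delta>' \<le> \<rho>s" using \<delta> \<rho>s by (auto simp: \<delta>'_def)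
  define a where "a n = \<rho>s + real n * \<delta>' / 2" for n
  have step: "Q (min (a n) \<rho>1)" for n
  proof (induct n)
    case 0
    show ?case using Qmono[OF Qs, of "min \<rho>s \<rho>1"] \<rho>s \<rho>1 rho by (simp add: a_def)
  next
    case (Suc n)
    show ?case
    proof (cases "a n \<ge> \<rho>1")
      case True
      then have "min (a (Suc n)) \<rho>1 = min (a n) \<rho>1" using \<delta>' by (simp add: a_def field_simps)
      then show ?thesis using Suc by simp
    next
      case False
      define r'' where "r'' = a n - \<delta>' / 4"
      have an: "a n \<ge> \<rho>s" using \<delta>' by (simp add: a_def)
      have r''0: "0 \<le> r''" using an \<delta>' by (simp add: r''_def)
      have "Q (a n)" using Suc False by simp
      then have lim: "(\<lambda>K. r'' ^ K * norm (y ^ K)) \<longlonglongrightarrow> 0"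
        using Qdown r''0 \<delta>' by (simp add: r''_def)
      have "a (Suc n) = a n + \<delta>'/2" by (simp add: a_def field_simps)
      then show ?thesis
        using KS[OF r''0 _ _ _ _ lim] False \<delta>' an \<rho>s \<rho>1 rho
        by (auto simp: r''_def min_def abs_if split: if_splits)
    qed
  qed
  obtain n where n: "(\<rho>1 - \<rho>s) / (\<delta>'/2) < real n" using reals_Archimedean2 by blast
  then have "a n \<ge> \<rho>1" using \<delta>' by (simp add: a_def field_simps)
  then have "Q \<rho>1" using step[of n] by simp
  then have "Q \<rho>" using Qmono \<rho>1 rho by simp
  then show ?thesis by (simp add: Q_def)
qed



lemma spec_shift: "c \<in> cspectrum (x + scaleC d 1) \<longleftrightarrow> c - d \<in> cspectrum (x::'a::cstar_algebra)"
proof -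
  have eq: "x + scaleC d 1 - scaleC c 1 = x - scaleC (c - d) 1"
    by (simp add: cs.scale_left_diff_distrib)
  show ?thesis unfolding cspectrum_def mem_Collect_eq eq by (rule refl)
qed

lemma spec_neg: "c \<in> cspectrum (- x) \<longleftrightarrow> - c \<in> cspectrum (x::'a::cstar_algebra)"
proof -
  have eq: "- x - scaleC c 1 = - (x - scaleC (- c) 1)"
    by (simp add: cs.scale_minus_left)
  show ?thesis unfolding cspectrum_def mem_Collect_eq eq cinvertible_minus by (rule refl)
qed

lemma spec_refl: "c \<in> cspectrum (scaleR t 1 - x) \<longleftrightarrow> of_real t - c \<in> cspectrum (x::'a::cstar_algebra)"
proof -
  have eq: "scaleR t 1 - x - scaleC c 1 = - (x - scaleC (of_real t - c) 1)"
    by (simp add: cs.scale_left_diff_distrib scaleC_of_real)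
  show ?thesis unfolding cspectrum_def mem_Collect_eq eq cinvertible_minus by (rule refl)
qed

lemma sa_norm_le:
  fixes y :: "'a::cstar_algebra"
  assumes y: "y \<in> sa" and r: "0 \<le> r" and sp: "\<And>c. c \<in> cspectrum y \<Longrightarrow> cmod c \<le> r"
  shows "norm y \<le> r"
proof (rule ccontr)
  assume "\<not> norm y \<le> r"
  then have lt: "r < norm y" by simp
  define \<rho> where "\<rho> = 2 / (norm y + r)"
  define R where "R = (if r = 0 then \<rho> + 1 else 1 / r)"
  have pos: "norm y + r > 0" using lt r by linarith
  have \<rho>0: "0 \<le> \<rho>" using pos by (simp add: \<rho>_def)
  have \<rho>R: "\<rho> < R"
  proof (cases "r = 0")
    case False
    then have rp: "r > 0" using r by simp
    have "\<rho> * r = 2 * r / (norm y + r)" by (simp add: \<rho>_def)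
    also have "\<dots> < 1" using lt pos by (simp add: divide_less_eq)
    finally show ?thesis using rp False by (simp add: R_def pos_less_divide_eq)
  qed (simp add: R_def)
  have inv: "cinvertible (1 - scaleC \<mu> y)" if "cmod \<mu> < R" for \<mu>
  proof (cases "\<mu> = 0")
    case True then show ?thesis by (simp add: cinvertible_one)
  next
    case False
    have "cmod (inverse \<mu>) > r"
    proof (cases "r = 0")
      case True then show ?thesis using False by simp
    next
      case r0: False
      then have rp: "r > 0" using r by simp
      have "cmod \<mu> < 1 / r" using that r0 by (simp add: R_def)
      then have "cmod \<mu> * r < 1" using rp by (simp add: pos_less_divide_eq)
      have cp: "cmod \<mu> > 0" using False by simp
      have "r < 1 / cmod \<mu>" using \<open>cmod \<mu> * r < 1\<close> cp by (simp add: pos_less_divide_eq mult.commute)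
      then show ?thesis by (simp add: norm_divide inverse_eq_divide)
    qed
    then have "inverse \<mu> \<notin> cspectrum y" using sp by force
    then have "cinvertible (y - scaleC (inverse \<mu>) 1)" by (simp add: cspectrum_def)
    then have "cinvertible (scaleC (- \<mu>) (y - scaleC (inverse \<mu>) 1))"
      using False by (intro cinvertible_scaleC) auto
    moreover have "scaleC (- \<mu>) (y - scaleC (inverse \<mu>) 1) = 1 - scaleC \<mu> y"
      using False by (simp add: cs.scale_right_diff_distrib scaleC_scaleC scaleC_one cs.scale_minus_left)
    ultimately show ?thesis by simp
  qed
  obtain C where C: "\<And>K. \<rho> ^ K * norm (y ^ K) \<le> C" using gelfand_bound[OF inv \<rho>0 \<rho>R] by blast
  define x where "x = \<rho> * norm y"
  have "x = 2 * norm y / (norm y + r)" by (simp add: x_def \<rho>_def)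
  then have x1: "x > 1" using lt pos by (simp add: less_divide_eq)
  obtain m where m: "C < x ^ m" using real_arch_pow[OF x1] by blast
  have "x ^ m \<le> x ^ (2 ^ m)" using x1 less_exp[of m] by (intro power_increasing) auto
  also have "x ^ (2^m) = \<rho> ^ (2^m) * norm (y ^ (2^m))"
    using norm_pow2_sa[OF y] by (simp add: x_def power_mult_distrib)
  also have "\<dots> \<le> C" by (rule C)
  finally show False using m by simp
qed

lemma mult_shift: "(y + scaleC a 1) * (y + scaleC b 1) = y * y + scaleC (a + b) y + scaleC (a * b) (1::'a::cstar_algebra)"
proof -
  have "(y + scaleC a 1) * (y + scaleC b 1) = y*y + y * scaleC b 1 + (scaleC a 1 * y + scaleC a 1 * scaleC b 1)"
    by (simp add: distrib_left distrib_right add.assoc)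
  also have "\<dots> = y*y + scaleC b y + (scaleC a y + scaleC (a*b) 1)"
    by (simp add: scaleC_1_mult mult_scaleC_1 scaleC_scaleC)
  also have "\<dots> = y*y + (scaleC a y + scaleC b y) + scaleC (a*b) 1"
    by (simp add: add.commute add.left_commute)
  also have "\<dots> = y*y + scaleC (a+b) y + scaleC (a*b) 1"
    by (simp add: scaleC_add_left)
  finally show ?thesis .
qed

lemma sa_spec_real:
  fixes y :: "'a::cstar_algebra"
  assumes y: "y \<in> sa" and c: "c \<in> cspectrum y"
  shows "Im c = 0"
proof (rule ccontr)
  assume ne: "Im c \<noteq> 0"
  have key: "(Re c)^2 + (Im c + s)^2 \<le> norm y ^ 2 + s^2" for s :: real
  proof -
    define z where "z = y + scaleC (\<i> * of_real s) 1"
    have "c + \<i> * of_real s \<in> cspectrum z"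
      unfolding z_def spec_shift using c by simp
    then have n1: "cmod (c + \<i> * of_real s) \<le> norm z" by (rule spec_norm)
    have adjz: "adj z = y + scaleC (- (\<i> * of_real s)) 1"
      using y by (simp add: z_def adj_add adj_scaleC sa_iff)
    have "adj z * z = y * y + scaleC (- (\<i> * of_real s) + \<i> * of_real s) y + scaleC (- (\<i> * of_real s) * (\<i> * of_real s)) 1"
      unfolding adjz by (simp only: z_def mult_shift)
    also have "- (\<i> * of_real s) * (\<i> * of_real s) = of_real (s^2)"
      by (simp add: complex_eq_iff power2_eq_square)
    finally have "adj z * z = y * y + scaleC (of_real (s^2)) 1" by simp
    moreover have "scaleC ((complex_of_real s)^2) (1::'a) = scaleR (s^2) 1"
      by (metis of_real_power scaleC_of_real)
    ultimately have "norm z ^ 2 = norm (y * y + scaleR (s^2) 1)"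
      by (simp add: cstar_identity[symmetric])
    also have "\<dots> \<le> norm (y * y) + norm (scaleR (s^2) (1::'a))" by (rule norm_triangle_ineq)
    also have "\<dots> = norm y ^ 2 + s^2" using norm_sq_sa[OF y] by simp
    finally have n2: "norm z ^ 2 \<le> norm y ^ 2 + s^2" .
    have "cmod (c + \<i> * of_real s) ^ 2 \<le> norm z ^ 2" using n1 by (intro power_mono) auto
    moreover have "cmod (c + \<i> * of_real s) ^ 2 = (Re c)^2 + (Im c + s)^2"
      by (simp add: cmod_power2)
    ultimately show ?thesis using n2 by simp
  qed
  define s where "s = (norm y ^ 2 + 1) / (2 * Im c)"
  have s2: "2 * Im c * s = norm y ^ 2 + 1" using ne by (simp add: s_def)
  have "(Im c + s)^2 = (Im c)^2 + 2 * Im c * s + s^2" by (simp add: power2_sum)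
  then have "(Re c)^2 + (Im c)^2 + (norm y ^ 2 + 1) + s^2 \<le> norm y ^ 2 + s^2"
    using key[of s] s2 by simp
  moreover have "(Re c)^2 \<ge> 0" "(Im c)^2 \<ge> 0" by simp_all
  ultimately show False by linarith
qed

lemma sa_spec_Reals: "y \<in> sa \<Longrightarrow> c \<in> cspectrum y \<Longrightarrow> c = of_real (Re c)"
  using sa_spec_real complex_eq_iff by force

lemma pos_char:
  fixes x :: "'a::cstar_algebra"
  assumes x: "x \<in> sa" and t: "norm x \<le> t"
  shows "cpositive x \<longleftrightarrow> norm (scaleR t 1 - x) \<le> t"
proof
  assume p: "cpositive x"
  have t0: "t \<ge> 0" using t norm_ge_zero[of x] by linarith
  show "norm (scaleR t 1 - x) \<le> t"
  proof (rule sa_norm_le[OF _ t0])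
    show "scaleR t 1 - x \<in> sa" using x by (simp add: sa_diff sa_scaleR sa_one)
    fix c assume "c \<in> cspectrum (scaleR t 1 - x)"
    then have w: "of_real t - c \<in> cspectrum x" by (simp add: spec_refl)
    then have "of_real t - c \<in> \<real>" "0 \<le> Re (of_real t - c)" using p by (auto simp: cpositive_def)
    moreover have "cmod (of_real t - c) \<le> t" using spec_norm[OF w] t by simp
    ultimately have "Im c = 0" "0 \<le> t - Re c" "Re (of_real t - c) \<le> t"
      using complex_Re_le_cmod[of "of_real t - c"] by (auto simp: complex_is_Real_iff)
    then show "cmod c \<le> t" by (simp add: cmod_eq_Re)
  qed
next
  assume n: "norm (scaleR t 1 - x) \<le> t"
  show "cpositive x" unfolding cpositive_def
  proof (intro conjI x subsetI)
    fix c assume c: "c \<in> cspectrum x"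
    have "of_real t - (of_real t - c) \<in> cspectrum x" using c by simp
    then have "of_real t - c \<in> cspectrum (scaleR t 1 - x)" by (simp only: spec_refl)
    then have "cmod (of_real t - c) \<le> t" using spec_norm n by fastforce
    moreover have ic: "Im c = 0" using sa_spec_real[OF x c] .
    ultimately have "\<bar>t - Re c\<bar> \<le> t" by (simp add: cmod_eq_Re)
    then show "c \<in> {z. z \<in> \<real> \<and> 0 \<le> Re z}" using ic by (simp add: complex_is_Real_iff)
  qed
qed

lemma cpositive_sa: "cpositive x \<Longrightarrow> x \<in> sa" by (simp add: cpositive_def)

lemma cpositive_add:
  fixes a b :: "'a::cstar_algebra"
  assumes a: "cpositive a" and b: "cpositive b"
  shows "cpositive (a + b)"
proof -
  have sa: "a \<in> sa" "b \<in> sa" using a b by (simp_all add: cpositive_def)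
  have na: "norm (scaleR (norm a) 1 - a) \<le> norm a" using pos_char[OF sa(1) order_refl] a by simp
  have nb: "norm (scaleR (norm b) 1 - b) \<le> norm b" using pos_char[OF sa(2) order_refl] b by simp
  have eq: "scaleR (norm a + norm b) 1 - (a + b) = (scaleR (norm a) 1 - a) + (scaleR (norm b) 1 - b)"
    by (simp add: scaleR_add_left)
  have "norm (scaleR (norm a + norm b) 1 - (a + b)) \<le> norm a + norm b"
    unfolding eq using na nb norm_triangle_ineq[of "scaleR (norm a) 1 - a" "scaleR (norm b) 1 - b"] by linarith
  moreover have "norm (a + b) \<le> norm a + norm b" by (rule norm_triangle_ineq)
  ultimately show ?thesis using pos_char[of "a + b" "norm a + norm b"] sa by (simp add: sa_add)
qed

lemma cpositive_zero: "cpositive (0::'a::cstar_algebra)"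
  unfolding cpositive_def
proof (intro conjI sa_zero subsetI)
  fix c assume c: "c \<in> cspectrum (0::'a)"
  have "c = 0"
  proof (rule ccontr)
    assume "c \<noteq> 0"
    then have "cinvertible (0 - scaleC c (1::'a))" by (simp add: cinvertible_minus cinvertible_scaleC1)
    then show False using c by (simp add: cspectrum_def)
  qed
  then show "c \<in> {z. z \<in> \<real> \<and> 0 \<le> Re z}" by simp
qed

lemma cpositive_antisym:
  fixes x :: "'a::cstar_algebra"
  assumes "cpositive x" "cpositive (- x)"
  shows "x = 0"
proof -
  have x: "x \<in> sa" using assms by (simp add: cpositive_def)
  have "cmod c \<le> 0" if c: "c \<in> cspectrum x" for c
  proof -
    have "-c \<in> cspectrum (-x)" using c by (simp add: spec_neg)
    then have "0 \<le> Re (-c)" using assms(2) by (auto simp: cpositive_def)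
    moreover have "0 \<le> Re c" using c assms(1) by (auto simp: cpositive_def)
    moreover have "Im c = 0" using sa_spec_real[OF x c] .
    ultimately have "c = 0" by (simp add: complex_eq_iff)
    then show ?thesis by simp
  qed
  then have "norm x \<le> 0" using sa_norm_le[OF x order_refl] by blast
  then show ?thesis by simp
qed

lemma sa_le_refl: "sa_le x (x::'a::cstar_algebra)" by (simp add: sa_le_def cpositive_zero)

lemma sa_le_trans: "sa_le x y \<Longrightarrow> sa_le y z \<Longrightarrow> sa_le x (z::'a::cstar_algebra)"
  unfolding sa_le_def using cpositive_add[of "z - y" "y - x"] by simp

lemma sa_le_antisym: "sa_le x y \<Longrightarrow> sa_le y x \<Longrightarrow> x = (y::'a::cstar_algebra)"
  unfolding sa_le_def using cpositive_antisym[of "y - x"] by simp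

lemma sa_le_neg: "sa_le (- y) (- x) \<longleftrightarrow> sa_le x (y::'a::cstar_algebra)"
  unfolding sa_le_def by (simp add: add.commute)

lemma sa_le_norm: "x \<in> sa \<Longrightarrow> sa_le x (scaleR (norm x) (1::'a::cstar_algebra))"
proof -
  assume x: "x \<in> sa"
  define z where "z = scaleR (norm x) 1 - x"
  have zs: "z \<in> sa" using x by (simp add: z_def sa_diff sa_scaleR sa_one)
  have nz: "norm z \<le> norm x + norm x" unfolding z_def
    using norm_triangle_ineq4[of "scaleR (norm x) (1::'a)" x] by simp
  have "scaleR (norm x + norm x) 1 - z = scaleR (norm x) 1 + x"
    by (simp only: z_def scaleR_add_left) (simp add: diff_diff_eq2)
  then have "norm (scaleR (norm x + norm x) 1 - z) \<le> norm x + norm x"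
    using norm_triangle_ineq[of "scaleR (norm x) (1::'a)" x] by simp
  then have "cpositive z" using pos_char[OF zs nz] by simp
  then show ?thesis by (simp add: sa_le_def z_def)
qed

lemma is_sup_unique: "is_sup_sa S s \<Longrightarrow> is_sup_sa S s' \<Longrightarrow> s = (s'::'a::cstar_algebra)"
  unfolding is_sup_sa_def by (meson sa_le_antisym)

lemma is_inf_unique: "is_inf_sa S s \<Longrightarrow> is_inf_sa S s' \<Longrightarrow> s = (s'::'a::cstar_algebra)"
  unfolding is_inf_sa_def by (meson sa_le_antisym)



section \<open>Polynomial evaluation\<close>

definition pev :: "complex poly \<Rightarrow> 'a::cstar_algebra \<Rightarrow> 'a" where
  "pev p x = (\<Sum>i\<le>degree p. scaleC (coeff p i) (x ^ i))"

lemma pev_bound: "degree p \<le> n \<Longrightarrow> pev p x = (\<Sum>i\<le>n. scaleC (coeff p i) (x ^ i))"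
  unfolding pev_def
  by (rule sum.mono_neutral_left) (auto simp: coeff_eq_0)

lemma pev_add: "pev (p + q) x = pev p x + pev q x"
proof -
  define n where "n = max (degree p) (degree q)"
  have "degree (p + q) \<le> n" unfolding n_def by (rule degree_add_le_max)
  then show ?thesis
    by (simp add: pev_bound[of "p+q" n] pev_bound[of p n] pev_bound[of q n] n_def
        scaleC_add_left sum.distrib)
qed

lemma pev_diff: "pev (p - q) x = pev p x - pev q x"
proof -
  define n where "n = max (degree p) (degree q)"
  have "degree (p - q) \<le> n" unfolding n_def by (rule degree_diff_le_max)
  then show ?thesis
    by (simp add: pev_bound[of "p-q" n] pev_bound[of p n] pev_bound[of q n] n_def
        cs.scale_left_diff_distrib sum_subtractf)
qed

lemma pev_smult: "pev (smult a p) x = scaleC a (pev p x)"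
proof -
  have "degree (smult a p) \<le> degree p" by (rule degree_smult_le)
  then show ?thesis
    by (simp add: pev_bound[of "smult a p" "degree p"] pev_def scaleC_scaleC cs.scale_sum_right)
qed

lemma pev_pCons: "pev (pCons a p) x = scaleC a 1 + x * pev p x"
proof -
  have "degree (pCons a p) \<le> Suc (degree p)" by (rule degree_pCons_le)
  then have "pev (pCons a p) x = (\<Sum>i\<le>Suc (degree p). scaleC (coeff (pCons a p) i) (x ^ i))"
    by (rule pev_bound)
  also have "\<dots> = scaleC a 1 + (\<Sum>i\<le>degree p. scaleC (coeff p i) (x ^ Suc i))"
    by (subst sum.atMost_Suc_shift) simp
  also have "(\<Sum>i\<le>degree p. scaleC (coeff p i) (x ^ Suc i)) = x * pev p x"
    by (simp add: pev_def sum_distrib_left scaleC_mult_right)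
  finally show ?thesis .
qed

lemma pev_0[simp]: "pev 0 x = 0" by (simp add: pev_def)

lemma pev_const: "pev [:a:] x = scaleC a 1"
  by (simp add: pev_pCons)

lemma pev_mult: "pev (p * q) x = pev p x * pev q (x::'a::cstar_algebra)"
proof (induct p)
  case 0 then show ?case by simp
next
  case (pCons a p)
  have "pev (pCons a p * q) x = scaleC a (pev q x) + x * pev (p * q) x"
    by (simp add: pev_add pev_smult pev_pCons)
  also have "\<dots> = (scaleC a 1 + x * pev p x) * pev q x"
    by (simp add: pCons distrib_right scaleC_1_mult mult.assoc)
  finally show ?case by (simp add: pev_pCons)
qed

lemma pev_comm: "pev p x * pev q x = pev q x * pev p (x::'a::cstar_algebra)"
  by (metis pev_mult mult.commute)

lemma pev_lin: "pev [:-z, 1:] x = x - scaleC z 1"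
  by (simp add: pev_pCons cs.scale_minus_left scaleC_one)

lemma pev_sa:
  assumes "\<And>i. cnj (coeff p i) = coeff p i" "x \<in> sa"
  shows "pev p x \<in> sa"
  using assms by (simp add: sa_iff pev_def adj_sum adj_scaleC adj_power)

section \<open>Homomorphisms\<close>

lemma hom_add: "unital_star_mono \<pi> \<Longrightarrow> \<pi> (x + y) = \<pi> x + \<pi> y" by (simp add: unital_star_mono_def)
lemma hom_mult: "unital_star_mono \<pi> \<Longrightarrow> \<pi> (x * y) = \<pi> x * \<pi> y" by (simp add: unital_star_mono_def)
lemma hom_one: "unital_star_mono \<pi> \<Longrightarrow> \<pi> 1 = 1" by (simp add: unital_star_mono_def)
lemma hom_scaleC: "unital_star_mono \<pi> \<Longrightarrow> \<pi> (scaleC c x) = scaleC c (\<pi> x)" by (simp add: unital_star_mono_def)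
lemma hom_adj: "unital_star_mono \<pi> \<Longrightarrow> \<pi> (adj x) = adj (\<pi> x)" by (simp add: unital_star_mono_def)
lemma hom_inj: "unital_star_mono \<pi> \<Longrightarrow> inj \<pi>" by (simp add: unital_star_mono_def)

lemma hom_zero: "unital_star_mono \<pi> \<Longrightarrow> \<pi> 0 = 0"
  using hom_add[of \<pi> 0 0] by simp
lemma hom_minus: "unital_star_mono \<pi> \<Longrightarrow> \<pi> (- x) = - \<pi> x"
  using hom_add[of \<pi> x "-x"] hom_zero[of \<pi>] by (simp add: eq_neg_iff_add_eq_0 add.commute)
lemma hom_diff: "unital_star_mono \<pi> \<Longrightarrow> \<pi> (x - y) = \<pi> x - \<pi> y"
  by (simp add: diff_conv_add_uminus hom_add hom_minus del: add_uminus_conv_diff)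
lemma hom_sum: "unital_star_mono \<pi> \<Longrightarrow> \<pi> (sum f A) = (\<Sum>i\<in>A. \<pi> (f i))"
  by (induct A rule: infinite_finite_induct) (auto simp: hom_add hom_zero)
lemma hom_power: "unital_star_mono \<pi> \<Longrightarrow> \<pi> (x ^ n) = \<pi> x ^ n"
  by (induct n) (auto simp: hom_mult hom_one)
lemma hom_scaleR: "unital_star_mono \<pi> \<Longrightarrow> \<pi> (scaleR r x) = scaleR r (\<pi> x)"
  by (metis hom_scaleC scaleC_of_real)
lemma hom_sa: "unital_star_mono \<pi> \<Longrightarrow> x \<in> sa \<Longrightarrow> \<pi> x \<in> sa"
  by (simp add: sa_iff hom_adj[symmetric])
lemma hom_pev: "unital_star_mono \<pi> \<Longrightarrow> \<pi> (pev p x) = pev p (\<pi> x)"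
  by (simp add: pev_def hom_sum hom_scaleC hom_power)

lemma hom_spec:
  assumes "unital_star_mono \<pi>"
  shows "cspectrum (\<pi> x) \<subseteq> cspectrum x"
proof
  fix c assume c: "c \<in> cspectrum (\<pi> x)"
  show "c \<in> cspectrum x"
  proof (rule ccontr)
    assume "c \<notin> cspectrum x"
    then obtain z where z: "(x - scaleC c 1) * z = 1" "z * (x - scaleC c 1) = 1"
      by (auto simp: cspectrum_def cinvertible_def)
    have e: "\<pi> (x - scaleC c 1) = \<pi> x - scaleC c 1"
      using assms by (simp add: hom_diff hom_scaleC hom_one)
    have "(\<pi> x - scaleC c 1) * \<pi> z = 1" "\<pi> z * (\<pi> x - scaleC c 1) = 1"
      using z assms by (metis e hom_mult hom_one)+
    then have "cinvertible (\<pi> x - scaleC c 1)" by (rule cinvertibleI)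
    then show False using c by (simp add: cspectrum_def)
  qed
qed

lemma hom_contr:
  assumes "unital_star_mono \<pi>" "x \<in> sa"
  shows "norm (\<pi> x) \<le> norm x"
  by (rule sa_norm_le[OF hom_sa[OF assms] norm_ge_zero]) (use hom_spec[OF assms(1)] spec_norm in blast)

section \<open>Spectral mapping\<close>

lemma spec_nonempty:
  assumes "(x::'a::cstar_algebra) \<in> sa"
  shows "cspectrum x \<noteq> {}"
proof
  assume e: "cspectrum x = {}"
  then have "norm x \<le> 0" using sa_norm_le[OF assms order_refl] by blast
  then have "x = 0" by simp
  moreover have "(0::complex) \<in> cspectrum (0::'a)"
    by (simp add: cspectrum_def cinvertible_def)
  ultimately show False using e by simp
qed

lemma pev_invertible:
  fixes x :: "'a::cstar_algebra"
  shows "q \<noteq> 0 \<Longrightarrow> (\<And>z. poly q z = 0 \<Longrightarrow> z \<notin> cspectrum x) \<Longrightarrow> cinvertible (pev q x)"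
proof (induct "degree q" arbitrary: q rule: less_induct)
  case less
  show ?case
  proof (cases "degree q = 0")
    case True
    then have q: "q = [:coeff q 0:]" using degree_0_id by metis
    then have "coeff q 0 \<noteq> 0" using less.prems(1) by (metis pCons_0_0)
    then show ?thesis by (subst q) (simp add: pev_const cinvertible_scaleC1)
  next
    case False
    then have "\<not> constant (poly q)" by (simp add: constant_degree)
    then obtain z where z: "poly q z = 0" using fundamental_theorem_of_algebra by blast
    then obtain r where r: "q = [:-z, 1:] * r" using poly_eq_0_iff_dvd by (metis dvdE)
    have r0: "r \<noteq> 0" using r less.prems(1) by auto
    have "degree ([:-z, 1:] * r) = degree [:-z, 1:] + degree r"
      by (rule degree_mult_eq) (simp_all add: r0)
    then have "degree q = 1 + degree r" using r by simp
    then have dr: "degree r < degree q" by simp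
    have "cinvertible (pev r x)"
    proof (rule less.hyps[OF dr r0])
      fix w assume "poly r w = 0"
      then have "poly q w = 0" using r by simp
      then show "w \<notin> cspectrum x" by (rule less.prems(2))
    qed
    moreover have "cinvertible (x - scaleC z 1)"
      using less.prems(2)[OF z] by (simp add: cspectrum_def)
    moreover have "pev q x = (x - scaleC z 1) * pev r x" using r by (simp only: pev_mult pev_lin)
    ultimately show ?thesis by (simp add: cinvertible_mult)
  qed
qed

lemma spec_map:
  fixes x :: "'a::cstar_algebra"
  assumes x: "x \<in> sa" and mu: "\<mu> \<in> cspectrum (pev p x)"
  shows "\<exists>c\<in>cspectrum x. poly p c = \<mu>"
proof (rule ccontr)
  assume H: "\<not> (\<exists>c\<in>cspectrum x. poly p c = \<mu>)"
  show False
  proof (cases "p - [:\<mu>:] = 0")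
    case True
    then have "p = [:\<mu>:]" by simp
    moreover obtain c where "c \<in> cspectrum x" using spec_nonempty[OF x] by blast
    ultimately show False using H by auto
  next
    case False
    have "cinvertible (pev (p - [:\<mu>:]) x)"
    proof (rule pev_invertible[OF False])
      fix z assume "poly (p - [:\<mu>:]) z = 0"
      then have "poly p z = \<mu>" by simp
      then show "z \<notin> cspectrum x" using H by blast
    qed
    then have "cinvertible (pev p x - scaleC \<mu> 1)" by (simp add: pev_diff pev_const)
    then show False using mu by (simp add: cspectrum_def)
  qed
qed

lemma spec_map_rev:
  fixes x :: "'a::cstar_algebra"
  assumes c: "c \<in> cspectrum x"
  shows "poly p c \<in> cspectrum (pev p x)"
proof (rule ccontr)
  assume "poly p c \<notin> cspectrum (pev p x)"
  then have inv: "cinvertible (pev p x - scaleC (poly p c) 1)" by (simp add: cspectrum_def)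
  define s where "s = synthetic_div p c"
  have "p - [:poly p c:] = [:-c, 1:] * s"
    using synthetic_div_correct'[of c p] by (simp add: s_def algebra_simps)
  then have "pev p x - scaleC (poly p c) 1 = pev [:-c, 1:] x * pev s x"
    by (metis pev_diff pev_const pev_mult)
  then have "cinvertible (pev [:-c, 1:] x * pev s x)" using inv by simp
  then have "cinvertible (pev [:-c, 1:] x)"
    by (rule cinvertible_comm_left[OF pev_comm])
  then show False using c by (simp add: pev_lin cspectrum_def)
qed

lemma pev_norm_le:
  fixes x :: "'a::cstar_algebra"
  assumes x: "x \<in> sa" and p: "\<And>i. cnj (coeff p i) = coeff p i" and r: "0 \<le> r"
    and b: "\<And>c. c \<in> cspectrum x \<Longrightarrow> cmod (poly p c) \<le> r"
  shows "norm (pev p x) \<le> r"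
  by (rule sa_norm_le[OF pev_sa[OF p x] r]) (use spec_map[OF x] b in blast)

lemma pev_norm_ge:
  "c \<in> cspectrum (x::'a::cstar_algebra) \<Longrightarrow> cmod (poly p c) \<le> norm (pev p x)"
  by (rule spec_norm[OF spec_map_rev])

definition rpoly :: "(nat \<Rightarrow> real) \<Rightarrow> nat \<Rightarrow> complex poly" where
  "rpoly a n = (\<Sum>i\<le>n. monom (complex_of_real (a i)) i)"

lemma rpoly_coeff: "coeff (rpoly a n) i = (if i \<le> n then complex_of_real (a i) else 0)"
  by (simp add: rpoly_def coeff_sum coeff_monom)

lemma rpoly_real: "cnj (coeff (rpoly a n) i) = coeff (rpoly a n) i"
  by (simp add: rpoly_coeff)

lemma rpoly_poly: "poly (rpoly a n) (complex_of_real t) = complex_of_real (\<Sum>i\<le>n. a i * t ^ i)"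
  by (simp add: rpoly_def poly_sum poly_monom)



lemma sa_closed_lim:
  fixes u :: "nat \<Rightarrow> 'a::cstar_algebra"
  assumes u: "\<And>n. u n \<in> sa" and L: "u \<longlonglongrightarrow> L"
  shows "L \<in> sa"
proof -
  have "(\<lambda>n. u n - adj L) \<longlonglongrightarrow> 0"
  proof (rule Lim_null_comparison)
    show "\<forall>\<^sub>F n in sequentially. norm (u n - adj L) \<le> norm (u n - L)"
      using u by (intro always_eventually allI) (metis adj_diff norm_adj sa_iff order_refl)
    show "(\<lambda>n. norm (u n - L)) \<longlonglongrightarrow> 0" using L by (simp add: tendsto_norm_zero_iff LIM_zero_iff)
  qed
  then have "u \<longlonglongrightarrow> adj L" by (simp add: LIM_zero_iff)
  then have "adj L = L" using L LIMSEQ_unique by blast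
  then show ?thesis by (simp add: sa_iff)
qed

lemma permanence:
  fixes \<pi> :: "'a::cstar_algebra \<Rightarrow> 'b::cstar_algebra"
  assumes \<pi>: "unital_star_mono \<pi>" and x: "x \<in> sa"
  shows "cspectrum x \<subseteq> cspectrum (\<pi> x)"
proof
  fix c assume c: "c \<in> cspectrum x"
  show "c \<in> cspectrum (\<pi> x)"
  proof (rule ccontr)
    assume nc: "c \<notin> cspectrum (\<pi> x)"
    obtain \<epsilon> where \<epsilon>: "\<epsilon> > 0" "\<And>c'. cmod (c' - c) < \<epsilon> \<Longrightarrow> c' \<notin> cspectrum (\<pi> x)"
      using spec_open[OF nc] by blast
    have \<pi>x: "\<pi> x \<in> sa" by (rule hom_sa[OF \<pi> x])
    define t where "t = Re c"
    have ct: "c = of_real t" using sa_spec_Reals[OF x c] t_def by simp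
    define f where "f s = max 0 (1 - \<bar>s - t\<bar> / \<epsilon>)" for s :: real
    have fc: "continuous_on UNIV f" unfolding f_def using \<epsilon>(1) by (intro continuous_intros) simp
    have ft: "f t = 1" by (simp add: f_def)
    define M where "M = norm x + norm (\<pi> x)"
    define S where "S = {-M..M}"
    have "\<exists>a N. \<forall>s\<in>S. \<bar>f s - (\<Sum>i\<le>N. a i * s ^ i)\<bar> < 1 / real (Suc n)" for n
    proof -
      obtain g where g: "real_polynomial_function g" "\<And>s. s \<in> S \<Longrightarrow> \<bar>f s - g s\<bar> < 1 / real (Suc n)"
        using Stone_Weierstrass_real_polynomial_function[of S f "1 / real (Suc n)"] fc
        by (auto simp: S_def intro: continuous_on_subset)
      obtain a N where "g = (\<lambda>s. \<Sum>i\<le>N. a i * s ^ i)" using g(1) real_polynomial_function_iff_sum by blast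
      then show ?thesis using g(2) by blast
    qed
    then obtain a N where aN: "\<And>n s. s \<in> S \<Longrightarrow> \<bar>f s - (\<Sum>i\<le>N n. a n i * s ^ i)\<bar> < 1 / real (Suc n)"
      by metis
    define G where "G n s = (\<Sum>i\<le>N n. a n i * s ^ i)" for n s
    define P where "P n = rpoly (a n) (N n)" for n
    have polyP: "poly (P n) (of_real s) = of_real (G n s)" for n s by (simp add: P_def G_def rpoly_poly)
    have realP: "cnj (coeff (P n) i) = coeff (P n) i" for n i by (simp add: P_def rpoly_real)
    have realPd: "cnj (coeff (P n - P m) i) = coeff (P n - P m) i" for n m i using realP by simp
    define u where "u n = pev (P n) x" for n
    have usa: "u n \<in> sa" for n by (simp add: u_def pev_sa[OF realP x])
    have specx: "c' = of_real (Re c') \<and> Re c' \<in> S" if "c' \<in> cspectrum x" for c'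
    proof -
      have "\<bar>Re c'\<bar> \<le> M" using spec_norm[OF that] abs_Re_le_cmod[of c'] norm_ge_zero[of "\<pi> x"]
        unfolding M_def by linarith
      then show ?thesis using sa_spec_Reals[OF x that] by (auto simp: S_def)
    qed
    have specpi: "c' = of_real (Re c') \<and> Re c' \<in> S \<and> f (Re c') = 0" if "c' \<in> cspectrum (\<pi> x)" for c'
    proof -
      have "\<bar>Re c'\<bar> \<le> M" using spec_norm[OF that] abs_Re_le_cmod[of c'] norm_ge_zero[of x]
        unfolding M_def by linarith
      moreover have re: "c' = of_real (Re c')" using sa_spec_Reals[OF \<pi>x that] .
      moreover have "\<bar>Re c' - t\<bar> \<ge> \<epsilon>"
      proof (rule ccontr)
        assume "\<not> \<bar>Re c' - t\<bar> \<ge> \<epsilon>"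
        then have "cmod (c' - c) < \<epsilon>" using re ct
          by (metis norm_of_real of_real_diff not_le)
        then show False using \<epsilon>(2) that by blast
      qed
      then have "f (Re c') = 0" using \<epsilon>(1) by (simp add: f_def)
      ultimately show ?thesis by (auto simp: S_def)
    qed
    have cauchy_bound: "norm (u n - u m) \<le> 1 / real (Suc n) + 1 / real (Suc m)" for n m
    proof -
      have "u n - u m = pev (P n - P m) x" by (simp add: u_def pev_diff)
      also have "norm \<dots> \<le> 1 / real (Suc n) + 1 / real (Suc m)"
      proof (rule pev_norm_le[OF x realPd])
        show "0 \<le> 1 / real (Suc n) + 1 / real (Suc m)" by simp
        fix c' assume c': "c' \<in> cspectrum x"
        then have e: "c' = of_real (Re c')" and s: "Re c' \<in> S" using specx by blast+
        have "poly (P n - P m) c' = of_real (G n (Re c') - G m (Re c'))"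
          by (subst e) (simp add: polyP)
        then have "cmod (poly (P n - P m) c') = \<bar>G n (Re c') - G m (Re c')\<bar>"
          by (simp only: norm_of_real)
        also have "\<dots> \<le> \<bar>f (Re c') - G n (Re c')\<bar> + \<bar>f (Re c') - G m (Re c')\<bar>" by simp
        also have "\<dots> \<le> 1 / real (Suc n) + 1 / real (Suc m)"
          using aN[OF s, of n] aN[OF s, of m] by (simp add: G_def)
        finally show "cmod (poly (P n - P m) c') \<le> 1 / real (Suc n) + 1 / real (Suc m)" .
      qed
      finally show ?thesis .
    qed
    have "Cauchy u"
    proof (rule metric_CauchyI)
      fix e :: real assume e: "e > 0"
      obtain K where K: "2 / e < real K" using reals_Archimedean2 by blast
      have K0: "real K > 0" using K e by (smt (verit) divide_pos_pos)
      have "dist (u m) (u n) < e" if "m \<ge> K" "n \<ge> K" for m n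
      proof -
        have "1 / real (Suc m) \<le> 1 / real K" "1 / real (Suc n) \<le> 1 / real K"
          using that K0 by (simp_all add: frac_le)
        moreover have "2 / real K < e" using K e K0 by (simp add: field_simps)
        ultimately show ?thesis using cauchy_bound[of m n] by (simp add: dist_norm)
      qed
      then show "\<exists>M. \<forall>m\<ge>M. \<forall>n\<ge>M. dist (u m) (u n) < e" by blast
    qed
    then obtain L where L: "u \<longlonglongrightarrow> L" using Cauchy_convergent_iff convergent_def by blast
    have Lsa: "L \<in> sa" using sa_closed_lim[OF usa L] .
    have pu: "\<pi> (u n) = pev (P n) (\<pi> x)" for n by (simp add: u_def hom_pev[OF \<pi>])
    have pu_small: "norm (\<pi> (u n)) \<le> 1 / real (Suc n)" for n
      unfolding pu
    proof (rule pev_norm_le[OF \<pi>x realP])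
      show "0 \<le> 1 / real (Suc n)" by simp
      fix c' assume c': "c' \<in> cspectrum (\<pi> x)"
      then have e: "c' = of_real (Re c')" and s: "Re c' \<in> S" and f0: "f (Re c') = 0"
        using specpi by blast+
      have "cmod (poly (P n) c') = \<bar>G n (Re c')\<bar>" by (subst e) (simp add: polyP)
      also have "\<dots> \<le> 1 / real (Suc n)" using aN[OF s, of n] f0 by (simp add: G_def)
      finally show "cmod (poly (P n) c') \<le> 1 / real (Suc n)" .
    qed
    have t1: "(\<lambda>n. \<pi> (u n)) \<longlonglongrightarrow> 0"
    proof (rule Lim_null_comparison)
      show "\<forall>\<^sub>F n in sequentially. norm (\<pi> (u n)) \<le> inverse (real (Suc n))"
        using pu_small by (simp add: inverse_eq_divide)
      show "(\<lambda>n. inverse (real (Suc n))) \<longlonglongrightarrow> 0" by (rule LIMSEQ_inverse_real_of_nat)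
    qed
    have t2: "(\<lambda>n. \<pi> (u n)) \<longlonglongrightarrow> \<pi> L"
    proof -
      have "(\<lambda>n. \<pi> (u n) - \<pi> L) \<longlonglongrightarrow> 0"
      proof (rule Lim_null_comparison)
        show "\<forall>\<^sub>F n in sequentially. norm (\<pi> (u n) - \<pi> L) \<le> norm (u n - L)"
        proof (intro always_eventually allI)
          fix n
          have "\<pi> (u n) - \<pi> L = \<pi> (u n - L)" by (simp add: hom_diff[OF \<pi>])
          then show "norm (\<pi> (u n) - \<pi> L) \<le> norm (u n - L)"
            using hom_contr[OF \<pi> sa_diff[OF usa Lsa]] by simp
        qed
        show "(\<lambda>n. norm (u n - L)) \<longlonglongrightarrow> 0" using L by (simp add: tendsto_norm_zero_iff LIM_zero_iff)
      qed
      then show ?thesis by (simp add: LIM_zero_iff)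
    qed
    have "\<pi> L = 0" using LIMSEQ_unique[OF t2 t1] .
    then have L0: "L = 0" using hom_inj[OF \<pi>] hom_zero[OF \<pi>] by (metis injD)
    have low: "norm (u n) \<ge> 1 - 1 / real (Suc n)" for n
    proof -
      have s: "t \<in> S"
        using specx[OF c] ct by simp
      have "cmod (poly (P n) c) \<le> norm (u n)" unfolding u_def by (rule pev_norm_ge[OF c])
      moreover have "cmod (poly (P n) c) = \<bar>G n t\<bar>" by (simp add: ct polyP)
      moreover have "\<bar>f t - G n t\<bar> < 1 / real (Suc n)" using aN[OF s, of n] by (simp add: G_def)
      ultimately show ?thesis using ft by linarith
    qed
    have "(\<lambda>n. norm (u n)) \<longlonglongrightarrow> 0" using tendsto_norm[OF L] L0 by simp
    then have "\<forall>\<^sub>F n in sequentially. norm (u n) < 1/2"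
      by (rule order_tendstoD(2)) simp
    then obtain n0 where n0: "\<And>n. n \<ge> n0 \<Longrightarrow> norm (u n) < 1/2"
      by (auto simp: eventually_sequentially)
    have "norm (u (Suc n0)) \<ge> 1/2"
    proof -
      have "1 / real (Suc (Suc n0)) \<le> 1/2" by (simp add: field_simps)
      then show ?thesis using low[of "Suc n0"] by linarith
    qed
    then show False using n0[of "Suc n0"] by simp
  qed
qed

lemma hom_spec_eq:
  "unital_star_mono \<pi> \<Longrightarrow> x \<in> sa \<Longrightarrow> cspectrum (\<pi> x) = cspectrum x"
  using hom_spec permanence by blast

lemma hom_order:
  fixes \<pi> :: "'a::cstar_algebra \<Rightarrow> 'b::cstar_algebra"
  assumes \<pi>: "unital_star_mono \<pi>" and x: "x \<in> sa" and y: "y \<in> sa"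
  shows "sa_le (\<pi> x) (\<pi> y) \<longleftrightarrow> sa_le x y"
proof -
  have d: "y - x \<in> sa" using x y by (rule sa_diff[rotated])
  have "\<pi> y - \<pi> x = \<pi> (y - x)" by (simp add: hom_diff[OF \<pi>])
  then show ?thesis
    using hom_spec_eq[OF \<pi> d] hom_sa[OF \<pi> d] d by (simp add: sa_le_def cpositive_def)
qed



lemma sa_le_neg2: "sa_le (- x) t \<longleftrightarrow> sa_le (- t) (x::'a::cstar_algebra)"
  by (simp add: sa_le_def add.commute)

lemma neg_le_iff: "sa_le x (- y) \<longleftrightarrow> sa_le y (- (x::'a::cstar_algebra))"
  unfolding sa_le_def by (simp only: diff_conv_add_uminus add.commute)

lemma down_inf_exists:
  assumes mc: "monotone_complete TYPE('a::cstar_algebra)" and D: "down_directed_bdd (D::'a set)"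
  shows "\<exists>s. is_inf_sa D s"
proof -
  have "up_directed_bdd (uminus ` D)"
    unfolding up_directed_bdd_def
  proof (intro conjI)
    show "uminus ` D \<subseteq> sa" using D by (auto simp: down_directed_bdd_def sa_minus)
    show "uminus ` D \<noteq> {}" using D by (auto simp: down_directed_bdd_def)
    show "\<forall>x\<in>uminus ` D. \<forall>y\<in>uminus ` D. \<exists>z\<in>uminus ` D. sa_le x z \<and> sa_le y z"
    proof (intro ballI)
      fix x y assume "x \<in> uminus ` D" "y \<in> uminus ` D"
      then obtain x0 y0 where xy: "x0 \<in> D" "y0 \<in> D" "x = - x0" "y = - y0" by auto
      have "\<exists>z\<in>D. sa_le z x0 \<and> sa_le z y0" using D xy(1,2) unfolding down_directed_bdd_def by blast
      then obtain z where z: "z \<in> D" "sa_le z x0" "sa_le z y0" by blast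
      have "sa_le x (- z)" "sa_le y (- z)" using z xy by (simp_all add: sa_le_neg)
      then show "\<exists>z\<in>uminus ` D. sa_le x z \<and> sa_le y z" using z(1) by blast
    qed
    obtain u where "u \<in> sa" "\<forall>x\<in>D. sa_le u x" using D by (auto simp: down_directed_bdd_def)
    then show "\<exists>u\<in>sa. \<forall>x\<in>uminus ` D. sa_le x u"
      by (intro bexI[of _ "-u"]) (auto simp: sa_le_neg sa_minus)
  qed
  then obtain t where t: "is_sup_sa (uminus ` D) t" using mc by (auto simp: monotone_complete_def)
  have "is_inf_sa D (- t)"
    unfolding is_inf_sa_def
  proof (intro conjI ballI impI)
    show "- t \<in> sa" using t by (simp add: is_sup_sa_def sa_minus)
    fix x assume "x \<in> D"
    then show "sa_le (- t) x" using t by (auto simp: is_sup_sa_def sa_le_neg2)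
  next
    fix u assume u: "u \<in> sa" "\<forall>x\<in>D. sa_le u x"
    have "sa_le t (- u)"
      using t u by (auto simp: is_sup_sa_def sa_minus sa_le_neg2 intro!: bspec[of sa _ "-u"])
    moreover have "- t - u = - u - t" by (simp only: diff_conv_add_uminus add.commute)
    ultimately show "sa_le u (- t)" unfolding sa_le_def by (simp only:)
  qed
  then show ?thesis by blast
qed

lemma rc_hom: "regular_monotone_completion i \<Longrightarrow> unital_star_mono i"
  by (simp add: regular_monotone_completion_def)

lemma rc_reg:
  assumes "regular_monotone_completion (i::'a::cstar_algebra \<Rightarrow> 'b::cstar_algebra)" "b \<in> sa"
  shows "is_sup_sa (i ` {a\<in>sa. sa_le (i a) b}) b"
proof -
  have eq: "{i a |a. a \<in> sa \<and> sa_le (i a) b} = i ` {a\<in>sa. sa_le (i a) b}" by auto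
  have "\<forall>b\<in>sa. is_sup_sa {i a |a. a \<in> sa \<and> sa_le (i a) b} b"
    using assms(1) by (simp add: regular_monotone_completion_def)
  then have "is_sup_sa {i a |a. a \<in> sa \<and> sa_le (i a) b} b" using assms(2) by blast
  then show ?thesis by (simp only: eq)
qed

lemma rc_L_mono:
  assumes i: "regular_monotone_completion (i::'a::cstar_algebra \<Rightarrow> 'b::cstar_algebra)"
    and q: "q1 \<in> sa" "q2 \<in> sa"
  shows "sa_le q1 q2 \<longleftrightarrow> {a\<in>sa. sa_le (i a) q1} \<subseteq> {a\<in>sa. sa_le (i a) q2}"
proof
  assume "sa_le q1 q2"
  then show "{a\<in>sa. sa_le (i a) q1} \<subseteq> {a\<in>sa. sa_le (i a) q2}" using sa_le_trans by blast
next
  assume sub: "{a\<in>sa. sa_le (i a) q1} \<subseteq> {a\<in>sa. sa_le (i a) q2}"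
  have "is_sup_sa (i ` {a\<in>sa. sa_le (i a) q1}) q1" by (rule rc_reg[OF i q(1)])
  moreover have "\<forall>x\<in>i ` {a\<in>sa. sa_le (i a) q1}. sa_le x q2" using sub by auto
  ultimately show "sa_le q1 q2" using q(2) by (simp add: is_sup_sa_def)
qed

lemma rc_L_inj:
  assumes i: "regular_monotone_completion (i::'a::cstar_algebra \<Rightarrow> 'b::cstar_algebra)"
    and q: "q1 \<in> sa" "q2 \<in> sa"
    and eq: "{a\<in>sa. sa_le (i a) q1} = {a\<in>sa. sa_le (i a) q2}"
  shows "q1 = q2"
  using rc_L_mono[OF i q] rc_L_mono[OF i q(2) q(1)] eq sa_le_antisym by blast

lemma rc_MD:
  assumes i: "regular_monotone_completion (i::'a::cstar_algebra \<Rightarrow> 'b::cstar_algebra)"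
    and s: "s \<in> sa" and x: "x \<in> sa"
    and H: "\<And>u. u \<in> sa \<Longrightarrow> sa_le s (i u) \<Longrightarrow> sa_le x (i u)"
  shows "sa_le x s"
proof -
  have hi: "unital_star_mono i" by (rule rc_hom[OF i])
  have sup: "is_sup_sa (i ` {a\<in>sa. sa_le (i a) (- s)}) (- s)" by (rule rc_reg[OF i sa_minus[OF s]])
  have "sa_le y (- x)" if yy: "y \<in> i ` {a\<in>sa. sa_le (i a) (- s)}" for y
  proof -
    obtain a where a: "a \<in> sa" "sa_le (i a) (- s)" "y = i a" using yy by auto
    have "sa_le s (- i a)" using a(2) neg_le_iff by blast
    then have "sa_le s (i (- a))" by (simp add: hom_minus[OF hi])
    then have "sa_le x (i (- a))" using H sa_minus[OF a(1)] by blast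
    then have "sa_le x (- i a)" by (simp add: hom_minus[OF hi])
    then show ?thesis using a(3) neg_le_iff by blast
  qed
  then have "sa_le (- s) (- x)" using sup sa_minus[OF x] by (simp add: is_sup_sa_def)
  then show ?thesis by (simp add: sa_le_neg)
qed

lemma rc_L_base:
  assumes i: "regular_monotone_completion (i::'a::cstar_algebra \<Rightarrow> 'b::cstar_algebra)" and a: "a \<in> sa"
  shows "{a'\<in>sa. sa_le (i a') (i a)} = {a'\<in>sa. sa_le a' a}"
  using hom_order[OF rc_hom[OF i] _ a] by auto

lemma rc_upper:
  assumes i: "regular_monotone_completion (i::'a::cstar_algebra \<Rightarrow> 'b::cstar_algebra)" and u: "u \<in> sa"
  shows "\<exists>a\<in>sa. sa_le u (i a)"
proof -
  have hi: "unital_star_mono i" by (rule rc_hom[OF i])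
  have "i (scaleR (norm u) 1) = scaleR (norm u) 1" by (simp add: hom_scaleR[OF hi] hom_one[OF hi])
  then show ?thesis using sa_le_norm[OF u] sa_scaleR[OF sa_one, of "norm u"]
    by (intro bexI[of _ "scaleR (norm u) 1"]) simp_all
qed

lemma rc_lower:
  assumes i: "regular_monotone_completion (i::'a::cstar_algebra \<Rightarrow> 'b::cstar_algebra)" and u: "u \<in> sa"
  shows "\<exists>a\<in>sa. sa_le (i a) u"
proof -
  have hi: "unital_star_mono i" by (rule rc_hom[OF i])
  obtain a where "a \<in> sa" "sa_le (- u) (i a)" using rc_upper[OF i sa_minus[OF u]] by blast
  then have "sa_le (- i a) u" using sa_le_neg2 by blast
  then show ?thesis using hom_minus[OF hi, of a] sa_minus[OF \<open>a \<in> sa\<close>]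
    by (intro bexI[of _ "- a"]) simp_all
qed

lemma oi_bij: "order_iso_sa \<Phi> \<Longrightarrow> bij_betw \<Phi> sa sa" by (simp add: order_iso_sa_def)
lemma oi_ord: "order_iso_sa \<Phi> \<Longrightarrow> x \<in> sa \<Longrightarrow> y \<in> sa \<Longrightarrow> sa_le x y \<longleftrightarrow> sa_le (\<Phi> x) (\<Phi> y)"
  by (simp add: order_iso_sa_def)
lemma oi_sa: "order_iso_sa \<Phi> \<Longrightarrow> x \<in> sa \<Longrightarrow> \<Phi> x \<in> sa"
  by (rule bij_betw_apply[OF oi_bij])
lemma oi_surj: "order_iso_sa \<Phi> \<Longrightarrow> \<Phi> ` sa = sa"
  by (rule bij_betw_imp_surj_on[OF oi_bij])
lemma oi_inj: "order_iso_sa \<Phi> \<Longrightarrow> inj_on \<Phi> sa"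
  by (rule bij_betw_imp_inj_on[OF oi_bij])

lemma oi_down:
  assumes \<Phi>: "order_iso_sa \<Phi>" and a: "a \<in> sa"
  shows "\<Phi> ` {a'\<in>sa. sa_le a' a} = {b\<in>sa. sa_le b (\<Phi> a)}"
proof
  show "\<Phi> ` {a'\<in>sa. sa_le a' a} \<subseteq> {b\<in>sa. sa_le b (\<Phi> a)}"
    using oi_ord[OF \<Phi> _ a] oi_sa[OF \<Phi>] by auto
  show "{b\<in>sa. sa_le b (\<Phi> a)} \<subseteq> \<Phi> ` {a'\<in>sa. sa_le a' a}"
  proof
    fix b assume b: "b \<in> {b\<in>sa. sa_le b (\<Phi> a)}"
    then obtain a' where "a' \<in> sa" "b = \<Phi> a'" using oi_surj[OF \<Phi>] by blast
    then show "b \<in> \<Phi> ` {a'\<in>sa. sa_le a' a}" using b oi_ord[OF \<Phi> _ a] by auto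
  qed
qed

lemma oi_inv:
  assumes \<Phi>: "order_iso_sa (\<Phi>::'a::cstar_algebra \<Rightarrow> 'b::cstar_algebra)"
  shows "order_iso_sa (inv_into sa \<Phi>)"
  unfolding order_iso_sa_def
proof (intro conjI ballI)
  show "bij_betw (inv_into sa \<Phi>) sa sa" using bij_betw_inv_into[OF oi_bij[OF \<Phi>]] .
  fix x y :: 'b assume x: "x \<in> sa" and y: "y \<in> sa"
  have "inv_into sa \<Phi> x \<in> sa" "inv_into sa \<Phi> y \<in> sa"
    using x y oi_surj[OF \<Phi>] by (auto intro: inv_into_into)
  moreover have "\<Phi> (inv_into sa \<Phi> x) = x" "\<Phi> (inv_into sa \<Phi> y) = y"
    using x y oi_surj[OF \<Phi>] by (auto intro: f_inv_into_f)
  ultimately show "sa_le x y \<longleftrightarrow> sa_le (inv_into sa \<Phi> x) (inv_into sa \<Phi> y)"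
    using oi_ord[OF \<Phi>, of "inv_into sa \<Phi> x" "inv_into sa \<Phi> y"] by simp
qed

section \<open>Extension\<close>

context
  fixes iA :: "'a::cstar_algebra \<Rightarrow> 'abar::cstar_algebra"
    and iB :: "'b::cstar_algebra \<Rightarrow> 'bbar::cstar_algebra"
    and \<Phi> :: "'a \<Rightarrow> 'b"
  assumes A: "regular_monotone_completion iA"
    and B: "regular_monotone_completion iB"
    and \<Phi>: "order_iso_sa \<Phi>"
begin

definition "LA q = {a\<in>(sa::'a set). sa_le (iA a) q}"
definition "LB q = {b\<in>(sa::'b set). sa_le (iB b) q}"

lemma LA_sub: "LA q \<subseteq> sa" by (auto simp: LA_def)
lemma LB_sub: "LB q \<subseteq> sa" by (auto simp: LB_def)

lemma trans_iso:
  assumes q: "q1 \<in> sa" "q2 \<in> sa" and p: "p1 \<in> sa" "p2 \<in> sa"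
    and e: "LB p1 = \<Phi> ` LA q1" "LB p2 = \<Phi> ` LA q2"
  shows "sa_le q1 q2 \<longleftrightarrow> sa_le p1 p2"
proof -
  have "sa_le q1 q2 \<longleftrightarrow> LA q1 \<subseteq> LA q2" using rc_L_mono[OF A q] by (simp add: LA_def)
  also have "\<dots> \<longleftrightarrow> \<Phi> ` LA q1 \<subseteq> \<Phi> ` LA q2"
    using inj_on_image_subset_iff[OF oi_inj[OF \<Phi>] LA_sub LA_sub] by simp
  also have "\<dots> \<longleftrightarrow> LB p1 \<subseteq> LB p2" using e by simp
  also have "\<dots> \<longleftrightarrow> sa_le p1 p2" using rc_L_mono[OF B p] by (simp add: LB_def)
  finally show ?thesis .
qed

lemma base:
  assumes a: "a \<in> sa"
  shows "LB (iB (\<Phi> a)) = \<Phi> ` LA (iA a)"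
proof -
  have "LA (iA a) = {a'\<in>sa. sa_le a' a}" using rc_L_base[OF A a] by (simp add: LA_def)
  moreover have "LB (iB (\<Phi> a)) = {b\<in>sa. sa_le b (\<Phi> a)}"
    using rc_L_base[OF B oi_sa[OF \<Phi> a]] by (simp add: LB_def)
  ultimately show ?thesis using oi_down[OF \<Phi> a] by simp
qed

lemma iA_sa: "a \<in> sa \<Longrightarrow> iA a \<in> sa" by (rule hom_sa[OF rc_hom[OF A]])
lemma iB_sa: "b \<in> sa \<Longrightarrow> iB b \<in> sa" by (rule hom_sa[OF rc_hom[OF B]])

lemma seteq:
  assumes "\<And>a. a \<in> sa \<Longrightarrow> sa_le (iB (\<Phi> a)) s' \<longleftrightarrow> sa_le (iA a) s"
  shows "LB s' = \<Phi> ` LA s"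
proof
  show "LB s' \<subseteq> \<Phi> ` LA s"
  proof
    fix b assume b: "b \<in> LB s'"
    then obtain a where a: "a \<in> sa" "b = \<Phi> a" using LB_sub oi_surj[OF \<Phi>] by blast
    then have "a \<in> LA s" using b assms by (simp add: LA_def LB_def)
    then show "b \<in> \<Phi> ` LA s" using a by blast
  qed
  show "\<Phi> ` LA s \<subseteq> LB s'"
    using assms oi_sa[OF \<Phi>] by (auto simp: LA_def LB_def)
qed

lemma extend_exists_aux: "q \<in> sa \<Longrightarrow> \<exists>q'\<in>sa. LB q' = \<Phi> ` LA q"
proof -
  define T where "T = {q\<in>(sa::'abar set). \<exists>q'\<in>(sa::'bbar set). LB q' = \<Phi> ` LA q}"
  define F where "F d = (SOME q'. q' \<in> sa \<and> LB q' = \<Phi> ` LA d)" for d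
  have F: "F d \<in> sa \<and> LB (F d) = \<Phi> ` LA d" if "d \<in> T" for d
  proof -
    have "\<exists>q'. q' \<in> sa \<and> LB q' = \<Phi> ` LA d" using that by (auto simp: T_def)
    then show ?thesis unfolding F_def by (rule someI_ex)
  qed
  have Tsa: "d \<in> sa" if "d \<in> T" for d using that by (simp add: T_def)
  have key: "sa_le d (iA u) \<longleftrightarrow> sa_le (F d) (iB (\<Phi> u))" if "d \<in> T" "u \<in> sa" for d u
    using trans_iso[OF Tsa[OF that(1)] iA_sa[OF that(2)] conjunct1[OF F[OF that(1)]]
        iB_sa[OF oi_sa[OF \<Phi> that(2)]] conjunct2[OF F[OF that(1)]] base[OF that(2)]] .
  have key2: "sa_le (iA u) d \<longleftrightarrow> sa_le (iB (\<Phi> u)) (F d)" if "d \<in> T" "u \<in> sa" for d u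
    using trans_iso[OF iA_sa[OF that(2)] Tsa[OF that(1)] iB_sa[OF oi_sa[OF \<Phi> that(2)]]
        conjunct1[OF F[OF that(1)]] base[OF that(2)] conjunct2[OF F[OF that(1)]]] .
  have keyDD: "sa_le d1 d2 \<longleftrightarrow> sa_le (F d1) (F d2)" if "d1 \<in> T" "d2 \<in> T" for d1 d2
    using trans_iso[OF Tsa[OF that(1)] Tsa[OF that(2)] conjunct1[OF F[OF that(1)]]
        conjunct1[OF F[OF that(2)]] conjunct2[OF F[OF that(1)]] conjunct2[OF F[OF that(2)]]] .
  have mcB: "monotone_complete TYPE('bbar)" using B by (simp add: regular_monotone_completion_def)
  have mcl: "monotone_closed T"
    unfolding monotone_closed_def
  proof (intro conjI allI impI)
    show "T \<subseteq> sa" by (auto simp: T_def)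
  next
    fix D s assume DT: "D \<subseteq> T" and Ds: "up_directed_bdd D \<and> is_sup_sa D s"
    then have D: "up_directed_bdd D" and s: "is_sup_sa D s" by auto
    have ssa: "s \<in> sa" using s by (simp add: is_sup_sa_def)
    have "up_directed_bdd (F ` D)"
      unfolding up_directed_bdd_def
    proof (intro conjI)
      show "F ` D \<subseteq> sa" using F DT by auto
      show "F ` D \<noteq> {}" using D by (auto simp: up_directed_bdd_def)
      show "\<forall>x\<in>F ` D. \<forall>y\<in>F ` D. \<exists>z\<in>F ` D. sa_le x z \<and> sa_le y z"
      proof (intro ballI)
        fix x y assume "x \<in> F ` D" "y \<in> F ` D"
        then obtain x0 y0 where xy: "x0 \<in> D" "y0 \<in> D" "x = F x0" "y = F y0" by auto
        have "\<exists>z\<in>D. sa_le x0 z \<and> sa_le y0 z" using D xy(1,2) unfolding up_directed_bdd_def by blast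
        then obtain z where "z \<in> D" "sa_le x0 z" "sa_le y0 z" by blast
        then show "\<exists>z\<in>F ` D. sa_le x z \<and> sa_le y z" using xy keyDD DT by blast
      qed
      obtain w where w: "w \<in> sa" "\<forall>x\<in>D. sa_le x w" using D by (auto simp: up_directed_bdd_def)
      obtain a0 where a0: "a0 \<in> sa" "sa_le w (iA a0)" using rc_upper[OF A w(1)] by blast
      have "\<forall>x\<in>F ` D. sa_le x (iB (\<Phi> a0))"
      proof
        fix x assume "x \<in> F ` D"
        then obtain d where d: "d \<in> D" "x = F d" by blast
        have "sa_le d (iA a0)" using sa_le_trans[of d w "iA a0"] w(2) d(1) a0(2) by blast
        then show "sa_le x (iB (\<Phi> a0))" using key[of d a0] d DT a0(1) by blast
      qed
      then show "\<exists>u\<in>sa. \<forall>x\<in>F ` D. sa_le x u" using iB_sa oi_sa[OF \<Phi> a0(1)] by blast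
    qed
    then obtain s' where s': "is_sup_sa (F ` D) s'" using mcB by (auto simp: monotone_complete_def)
    have s'sa: "s' \<in> sa" using s' by (simp add: is_sup_sa_def)
    have "LB s' = \<Phi> ` LA s"
    proof (rule seteq)
      fix a :: 'a assume a: "a \<in> sa"
      show "sa_le (iB (\<Phi> a)) s' \<longleftrightarrow> sa_le (iA a) s"
      proof
        assume h: "sa_le (iB (\<Phi> a)) s'"
        show "sa_le (iA a) s"
        proof (rule rc_MD[OF A ssa iA_sa[OF a]])
          fix u :: 'a assume u: "u \<in> sa" "sa_le s (iA u)"
          have "\<forall>d\<in>D. sa_le d (iA u)" using s u(2) sa_le_trans by (auto simp: is_sup_sa_def)
          then have "\<forall>x\<in>F ` D. sa_le x (iB (\<Phi> u))" using key DT u(1) by blast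
          then have "sa_le s' (iB (\<Phi> u))" using s' iB_sa oi_sa[OF \<Phi> u(1)] by (simp add: is_sup_sa_def)
          then have "sa_le (iB (\<Phi> a)) (iB (\<Phi> u))" using h sa_le_trans by blast
          then have "sa_le (\<Phi> a) (\<Phi> u)" using hom_order[OF rc_hom[OF B]] oi_sa[OF \<Phi>] a u(1) by blast
          then have "sa_le a u" using oi_ord[OF \<Phi> a u(1)] by simp
          then show "sa_le (iA a) (iA u)" using hom_order[OF rc_hom[OF A] a u(1)] by simp
        qed
      next
        assume h: "sa_le (iA a) s"
        show "sa_le (iB (\<Phi> a)) s'"
        proof (rule rc_MD[OF B s'sa iB_sa[OF oi_sa[OF \<Phi> a]]])
          fix u' :: 'b assume u': "u' \<in> sa" "sa_le s' (iB u')"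
          obtain u where u: "u \<in> sa" "u' = \<Phi> u" using u'(1) oi_surj[OF \<Phi>] by blast
          have "\<forall>x\<in>F ` D. sa_le x (iB (\<Phi> u))" using s' u'(2) u(2) sa_le_trans by (auto simp: is_sup_sa_def)
          then have "\<forall>d\<in>D. sa_le d (iA u)" using key DT u(1) by blast
          then have "sa_le s (iA u)" using s iA_sa[OF u(1)] by (simp add: is_sup_sa_def)
          then have "sa_le (iA a) (iA u)" using h sa_le_trans by blast
          then have "sa_le a u" using hom_order[OF rc_hom[OF A] a u(1)] by simp
          then have "sa_le (\<Phi> a) (\<Phi> u)" using oi_ord[OF \<Phi> a u(1)] by simp
          then show "sa_le (iB (\<Phi> a)) (iB u')"
            using hom_order[OF rc_hom[OF B] oi_sa[OF \<Phi> a] oi_sa[OF \<Phi> u(1)]] u(2) by simp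
        qed
      qed
    qed
    then show "s \<in> T" using ssa s'sa by (auto simp: T_def)
  next
    fix D s assume DT: "D \<subseteq> T" and Ds: "down_directed_bdd D \<and> is_inf_sa D s"
    then have D: "down_directed_bdd D" and s: "is_inf_sa D s" by auto
    have ssa: "s \<in> sa" using s by (simp add: is_inf_sa_def)
    have "down_directed_bdd (F ` D)"
      unfolding down_directed_bdd_def
    proof (intro conjI)
      show "F ` D \<subseteq> sa" using F DT by auto
      show "F ` D \<noteq> {}" using D by (auto simp: down_directed_bdd_def)
      show "\<forall>x\<in>F ` D. \<forall>y\<in>F ` D. \<exists>z\<in>F ` D. sa_le z x \<and> sa_le z y"
      proof (intro ballI)
        fix x y assume "x \<in> F ` D" "y \<in> F ` D"
        then obtain x0 y0 where xy: "x0 \<in> D" "y0 \<in> D" "x = F x0" "y = F y0" by auto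
        have "\<exists>z\<in>D. sa_le z x0 \<and> sa_le z y0" using D xy(1,2) unfolding down_directed_bdd_def by blast
        then obtain z where "z \<in> D" "sa_le z x0" "sa_le z y0" by blast
        then show "\<exists>z\<in>F ` D. sa_le z x \<and> sa_le z y" using xy keyDD DT by blast
      qed
      obtain w where w: "w \<in> sa" "\<forall>x\<in>D. sa_le w x" using D by (auto simp: down_directed_bdd_def)
      obtain a0 where a0: "a0 \<in> sa" "sa_le (iA a0) w" using rc_lower[OF A w(1)] by blast
      have "\<forall>x\<in>F ` D. sa_le (iB (\<Phi> a0)) x"
      proof
        fix x assume "x \<in> F ` D"
        then obtain d where d: "d \<in> D" "x = F d" by blast
        have "sa_le (iA a0) d" using sa_le_trans[of "iA a0" w d] w(2) d(1) a0(2) by blast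
        then show "sa_le (iB (\<Phi> a0)) x" using key2[of d a0] d DT a0(1) by blast
      qed
      then show "\<exists>u\<in>sa. \<forall>x\<in>F ` D. sa_le u x" using iB_sa oi_sa[OF \<Phi> a0(1)] by blast
    qed
    then obtain s' where s': "is_inf_sa (F ` D) s'" using down_inf_exists[OF mcB] by blast
    have s'sa: "s' \<in> sa" using s' by (simp add: is_inf_sa_def)
    have "LB s' = \<Phi> ` LA s"
    proof (rule seteq)
      fix a :: 'a assume a: "a \<in> sa"
      have "sa_le (iB (\<Phi> a)) s' \<longleftrightarrow> (\<forall>x\<in>F ` D. sa_le (iB (\<Phi> a)) x)"
        using s' iB_sa[OF oi_sa[OF \<Phi> a]] sa_le_trans unfolding is_inf_sa_def by blast
      also have "\<dots> \<longleftrightarrow> (\<forall>d\<in>D. sa_le (iA a) d)" using key2 DT a by auto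
      also have "\<dots> \<longleftrightarrow> sa_le (iA a) s"
        using s iA_sa[OF a] sa_le_trans unfolding is_inf_sa_def by blast
      finally show "sa_le (iB (\<Phi> a)) s' \<longleftrightarrow> sa_le (iA a) s" .
    qed
    then show "s \<in> T" using ssa s'sa by (auto simp: T_def)
  qed
  have "iA ` sa \<subseteq> T"
  proof
    fix q assume "q \<in> iA ` sa"
    then obtain a where a: "a \<in> sa" "q = iA a" by blast
    have "iB (\<Phi> a) \<in> sa" using iB_sa oi_sa[OF \<Phi> a(1)] by blast
    then show "q \<in> T" using base[OF a(1)] iA_sa[OF a(1)] a(2) unfolding T_def by blast
  qed
  then have "monotone_closure (iA ` sa) \<subseteq> T" using mcl by (auto simp: monotone_closure_def)
  moreover have "monotone_closure (iA ` sa) = (sa :: 'abar set)"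
    using A by (simp add: regular_monotone_completion_def)
  ultimately show "q \<in> sa \<Longrightarrow> \<exists>q'\<in>sa. LB q' = \<Phi> ` LA q" by (auto simp: T_def)
qed

lemma extend_exists: "q \<in> sa \<Longrightarrow> \<exists>q'\<in>sa. {b\<in>sa. sa_le (iB b) q'} = \<Phi> ` {a\<in>sa. sa_le (iA a) q}"
  using extend_exists_aux unfolding LA_def LB_def .

lemma base': "a \<in> sa \<Longrightarrow> {b\<in>sa. sa_le (iB b) (iB (\<Phi> a))} = \<Phi> ` {a'\<in>sa. sa_le (iA a') (iA a)}"
  using base unfolding LA_def LB_def .

lemma seteq': "(\<And>a. a \<in> sa \<Longrightarrow> sa_le (iB (\<Phi> a)) s' \<longleftrightarrow> sa_le (iA a) s) \<Longrightarrow>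
    {b\<in>sa. sa_le (iB b) s'} = \<Phi> ` {a\<in>sa. sa_le (iA a) s}"
  using seteq unfolding LA_def LB_def .

end

theorem theorem3p5:
  fixes iA :: "'a::cstar_algebra \<Rightarrow> 'abar::cstar_algebra"
    and iB :: "'b::cstar_algebra \<Rightarrow> 'bbar::cstar_algebra"
    and \<Phi> :: "'a \<Rightarrow> 'b"
  assumes "regular_monotone_completion iA"
    and "regular_monotone_completion iB"
    and "order_iso_sa \<Phi>"
  shows "\<exists>\<Psi>::'abar \<Rightarrow> 'bbar. order_iso_sa \<Psi> \<and> (\<forall>a\<in>sa. \<Psi> (iA a) = iB (\<Phi> a)) \<and>
           (\<forall>\<Psi>'::'abar \<Rightarrow> 'bbar. order_iso_sa \<Psi>' \<and> (\<forall>a\<in>sa. \<Psi>' (iA a) = iB (\<Phi> a))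
              \<longrightarrow> (\<forall>x\<in>sa. \<Psi>' x = \<Psi> x))"
proof -
  note A = assms(1) and B = assms(2) and \<Phi> = assms(3)
  define LA where "LA q = {a\<in>(sa::'a set). sa_le (iA a) q}" for q
  define LB where "LB q = {b\<in>(sa::'b set). sa_le (iB b) q}" for q
  have LA_sub: "LA q \<subseteq> sa" for q by (auto simp: LA_def)
  have LB_sub: "LB q \<subseteq> sa" for q by (auto simp: LB_def)
  have ex: "\<exists>q'\<in>sa. LB q' = \<Phi> ` LA q" if "q \<in> sa" for q
    using extend_exists[OF A B \<Phi> that] by (simp add: LA_def LB_def)
  define \<Psi> where "\<Psi> q = (SOME q'. q' \<in> sa \<and> LB q' = \<Phi> ` LA q)" for q
  have \<Psi>: "\<Psi> q \<in> sa \<and> LB (\<Psi> q) = \<Phi> ` LA q" if "q \<in> sa" for q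
  proof -
    have "\<exists>q'. q' \<in> sa \<and> LB q' = \<Phi> ` LA q" using ex[OF that] by blast
    then show ?thesis unfolding \<Psi>_def by (rule someI_ex)
  qed
  have ord: "sa_le q1 q2 \<longleftrightarrow> sa_le (\<Psi> q1) (\<Psi> q2)" if q: "q1 \<in> sa" "q2 \<in> sa" for q1 q2
  proof -
    have "sa_le q1 q2 \<longleftrightarrow> LA q1 \<subseteq> LA q2" using rc_L_mono[OF A q] by (simp add: LA_def)
    also have "\<dots> \<longleftrightarrow> \<Phi> ` LA q1 \<subseteq> \<Phi> ` LA q2"
      using inj_on_image_subset_iff[OF oi_inj[OF \<Phi>] LA_sub LA_sub] by simp
    also have "\<dots> \<longleftrightarrow> LB (\<Psi> q1) \<subseteq> LB (\<Psi> q2)" using \<Psi>[OF q(1)] \<Psi>[OF q(2)] by simp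
    also have "\<dots> \<longleftrightarrow> sa_le (\<Psi> q1) (\<Psi> q2)"
      using rc_L_mono[OF B conjunct1[OF \<Psi>[OF q(1)]] conjunct1[OF \<Psi>[OF q(2)]]] by (simp add: LB_def)
    finally show ?thesis .
  qed
  have inj: "inj_on \<Psi> sa"
  proof (rule inj_onI)
    fix q1 q2 :: 'abar assume q: "q1 \<in> sa" "q2 \<in> sa" and e: "\<Psi> q1 = \<Psi> q2"
    have "sa_le q1 q2" "sa_le q2 q1" using ord[OF q] ord[OF q(2) q(1)] e sa_le_refl by simp_all
    then show "q1 = q2" by (rule sa_le_antisym)
  qed
  have surj: "\<Psi> ` sa = sa"
  proof
    show "\<Psi> ` sa \<subseteq> sa" using \<Psi> by auto
    show "sa \<subseteq> \<Psi> ` sa"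
    proof
      fix q' :: 'bbar assume q': "q' \<in> sa"
      obtain q where q: "q \<in> sa" "LA q = inv_into sa \<Phi> ` LB q'"
        using extend_exists[OF B A oi_inv[OF \<Phi>] q'] by (auto simp: LA_def LB_def)
      have "\<Phi> ` LA q = LB q'" using q(2) image_inv_into_cancel[OF oi_surj[OF \<Phi>] LB_sub] by simp
      then have "LB (\<Psi> q) = LB q'" using \<Psi>[OF q(1)] by simp
      then have "\<Psi> q = q'" using rc_L_inj[OF B conjunct1[OF \<Psi>[OF q(1)]] q'] by (simp add: LB_def)
      then show "q' \<in> \<Psi> ` sa" using q(1) by blast
    qed
  qed
  have iso: "order_iso_sa \<Psi>"
    unfolding order_iso_sa_def bij_betw_def using inj surj ord by blast
  have ext: "\<Psi> (iA a) = iB (\<Phi> a)" if a: "a \<in> sa" for a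
  proof -
    have ia: "iA a \<in> sa" by (rule hom_sa[OF rc_hom[OF A] a])
    have ib: "iB (\<Phi> a) \<in> sa" by (rule hom_sa[OF rc_hom[OF B] oi_sa[OF \<Phi> a]])
    have "LB (\<Psi> (iA a)) = LB (iB (\<Phi> a))"
      using \<Psi>[OF ia] base'[OF A B \<Phi> a] by (simp add: LA_def LB_def)
    then show ?thesis using rc_L_inj[OF B conjunct1[OF \<Psi>[OF ia]] ib] by (simp add: LB_def)
  qed
  have uniq: "\<forall>x\<in>sa. \<Psi>' x = \<Psi> x"
    if h: "order_iso_sa \<Psi>' \<and> (\<forall>a\<in>sa. \<Psi>' (iA a) = iB (\<Phi> a))" for \<Psi>' :: "'abar \<Rightarrow> 'bbar"
  proof
    fix x :: 'abar assume x: "x \<in> sa"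
    have iso': "order_iso_sa \<Psi>'" using h by blast
    have "LB (\<Psi>' x) = \<Phi> ` LA x"
      unfolding LA_def LB_def
    proof (rule seteq'[OF A B \<Phi>])
      fix a :: 'a assume a: "a \<in> sa"
      have ia: "iA a \<in> sa" by (rule hom_sa[OF rc_hom[OF A] a])
      have "sa_le (iB (\<Phi> a)) (\<Psi>' x) \<longleftrightarrow> sa_le (\<Psi>' (iA a)) (\<Psi>' x)" using h a by simp
      also have "\<dots> \<longleftrightarrow> sa_le (iA a) x" using oi_ord[OF iso' ia x] by simp
      finally show "sa_le (iB (\<Phi> a)) (\<Psi>' x) \<longleftrightarrow> sa_le (iA a) x" .
    qed
    then have "LB (\<Psi>' x) = LB (\<Psi> x)" using \<Psi>[OF x] by simp
    then show "\<Psi>' x = \<Psi> x"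
      using rc_L_inj[OF B oi_sa[OF iso' x] conjunct1[OF \<Psi>[OF x]]] by (simp add: LB_def)
  qed
  show ?thesis using iso ext uniq by blast
qed


end
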